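(* Let $r\ge 3$ and $1\le s\le r-1$ be integers. Then the automorphism group of the split Praeger-Xu graph $\mathrm{sC}(r,s)$ is $\mathrm{Aut}(\mathrm{sC}(r,s))=H$ (acting on $\mathrm{sC}(r,s)$ as described below), and $H$ acts transitively on $V\mathrm{sC}(r,s)$.
   Context: Praeger-Xu graphs: for $r\ge3$, $s\ge1$, let $V_{r,s}$ be the set of pairs $(x;\varepsilon_0\varepsilon_1\cdots\varepsilon_{s-1})$ with $x\in\mathbb{Z}_r$ and $\varepsilon_i\in\mathbb{Z}_2$; such a pair is identified with the directed walk $(x,\varepsilon_0),(x+1,\varepsilon_1),\dots,(x+s-1,\varepsilon_{s-1})$ in $\mathbb{Z}_r\times\mathbb{Z}_2$. The digraph $\vec{\mathrm{C}}(r,s)$ has vertex set $V_{r,s}$ and arcs from $(x;\varepsilon h)$ to $(x+1;h0)$ and $(x+1;h1)$ for every $\varepsilon\in\mathbb{Z}_2$ and every string $h$ of length $s-1$. $\mathrm{C}(r,s)$ is the underlying undirected ($4$-valent) graph. The partition $\mathcal{S}$ of $E\mathrm{C}(r,s)$ consists of the $4$-cycles $(x;0h)\sim(x+1;h0)\sim(x;1h)\sim(x+1;h1)\sim(x;0h)$, for $x\in\mathbb{Z}_r$ and $h$ a string in $\mathbb{Z}_2$ of length $s-1$. Splitting: for a $4$-valent graph $\Delta$ and a partition $\mathcal{C}$ of $E\Delta$ into cycles, $\mathrm{s}(\Delta,\mathcal{C})$ is the cubic graph with vertex set $\{(\alpha,C)\in V\Delta\times\mathcal{C}:\alpha\in VC\}$,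 $(\alpha,C)\sim(\beta,D)$ iff either $C\ne D$ and $\alpha=\beta$, or $C=D$ and $\alpha\sim\beta$ in $\Delta$. The split Praeger-Xu graph is $\mathrm{sC}(r,s)=\mathrm{s}(\mathrm{C}(r,s),\mathcal{S})$. The group $H$: let $H\cong C_2\wr D_r$ be the group of permutations of $\mathbb{Z}_r\times\mathbb{Z}_2$ of the form $(x,i)\mapsto(\varphi(x),i+c_x)$ with $\varphi(x)=\pm x+b$ ($b\in\mathbb{Z}_r$) and $(c_x)_{x\in\mathbb{Z}_r}\in\mathbb{Z}_2^{r}$ (generated by the transpositions $\tau_i$ swapping $(i,0),(i,1)$, the rotation $(x,i)\mapsto(x+1,i)$ and the reflection $(x,i)\mapsto(-x,i)$). An element $g\in H$ maps the walk $(x+j,\varepsilon_j)_{0\le j\le s-1}$ to the walk $((x+j,\varepsilon_j)^g)_j$, which is a forward or backward directed walk; reading it in the forward direction gives an element of $V_{r,s}$. This defines a faithful action of $H$ by automorphisms of $\mathrm{C}(r,s)$ that preserves $\mathcal{S}$, hence an action on $\mathrm{sC}(r,s)$ by $(v,C)^g=(v^g,C^g)$. *)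

theory Defs
  imports Main
begin

text \<open>Vertices of C(r,s): pairs (x, eps) with x in Z_r (represented by 0..r-1) and
  eps a bool list of length s (False = 0, True = 1).\<close>

type_synonym pxv = "nat \<times> bool list"

definition PX_V :: "nat \<Rightarrow> nat \<Rightarrow> pxv set" where
  "PX_V r s = {(x, e). x < r \<and> length e = s}"

definition PX_arc :: "nat \<Rightarrow> nat \<Rightarrow> pxv \<Rightarrow> pxv \<Rightarrow> bool" where
  "PX_arc r s u v \<longleftrightarrow> u \<in> PX_V r s \<and> v \<in> PX_V r s \<and>
     (\<exists>e h d. snd u = e # h \<and> fst v = (fst u + 1) mod r \<and> snd v = h @ [d])"

definition PX_adj :: "nat \<Rightarrow> nat \<Rightarrow> pxv \<Rightarrow> pxv \<Rightarrow> bool" where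
  "PX_adj r s u v \<longleftrightarrow> PX_arc r s u v \<or> PX_arc r s v u"

definition PX_cyc :: "nat \<Rightarrow> nat \<Rightarrow> bool list \<Rightarrow> pxv set set" where
  "PX_cyc r x h =
    (let a = (x, False # h); b = ((x + 1) mod r, h @ [False]);
         c = (x, True # h); d = ((x + 1) mod r, h @ [True])
     in {{a, b}, {b, c}, {c, d}, {d, a}})"

definition PX_S :: "nat \<Rightarrow> nat \<Rightarrow> pxv set set set" where
  "PX_S r s = {PX_cyc r x h | x h. x < r \<and> length h = s - 1}"

text \<open>Generic splitting construction s(Delta, C); a cycle is given by its edge set,
  its vertex set is the union of its edges.\<close>
definition split_V :: "'a set set set \<Rightarrow> ('a \<times> 'a set set) set" where
  "split_V Cs = {(a, C). C \<in> Cs \<and> a \<in> \<Union>C}"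

definition split_adj :: "('a \<Rightarrow> 'a \<Rightarrow> bool) \<Rightarrow> ('a \<times> 'a set set) \<Rightarrow> ('a \<times> 'a set set) \<Rightarrow> bool" where
  "split_adj adj p q \<longleftrightarrow>
     (snd p \<noteq> snd q \<and> fst p = fst q) \<or> (snd p = snd q \<and> adj (fst p) (fst q))"

definition sPX_V :: "nat \<Rightarrow> nat \<Rightarrow> (pxv \<times> pxv set set) set" where
  "sPX_V r s = split_V (PX_S r s)"

definition sPX_adj :: "nat \<Rightarrow> nat \<Rightarrow> (pxv \<times> pxv set set) \<Rightarrow> (pxv \<times> pxv set set) \<Rightarrow> bool" where
  "sPX_adj r s = split_adj (PX_adj r s)"

definition is_aut :: "'v set \<Rightarrow> ('v \<Rightarrow> 'v \<Rightarrow> bool) \<Rightarrow> ('v \<Rightarrow> 'v) \<Rightarrow> bool" where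
  "is_aut V adj f \<longleftrightarrow> bij_betw f V V \<and> (\<forall>u\<in>V. \<forall>v\<in>V. adj u v \<longleftrightarrow> adj (f u) (f v))"

text \<open>The group H = C_2 wr D_r of permutations of Z_r x Z_2:
  (x,i) maps to (phi x, i + c_x) with phi x = x + b or phi x = -x + b.\<close>
definition H_map :: "nat \<Rightarrow> bool \<Rightarrow> nat \<Rightarrow> (nat \<Rightarrow> bool) \<Rightarrow> nat \<times> bool \<Rightarrow> nat \<times> bool" where
  "H_map r neg b c = (\<lambda>(x, i).
     ((if neg then r - x mod r + b else x mod r + b) mod r, if c (x mod r) then \<not> i else i))"

definition H_grp :: "nat \<Rightarrow> (nat \<times> bool \<Rightarrow> nat \<times> bool) set" where
  "H_grp r = {H_map r neg b c | neg b c. b < r}"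

definition walk_pts :: "nat \<Rightarrow> pxv \<Rightarrow> (nat \<times> bool) list" where
  "walk_pts r v = map (\<lambda>j. ((fst v + j) mod r, snd v ! j)) [0..<length (snd v)]"

definition is_fwd :: "nat \<Rightarrow> (nat \<times> bool) list \<Rightarrow> bool" where
  "is_fwd r L \<longleftrightarrow> (\<forall>j. Suc j < length L \<longrightarrow> fst (L ! Suc j) = (fst (L ! j) + 1) mod r)"

text \<open>Action of g on V_{r,s}: map the walk pointwise and read it forward.\<close>
definition act_V :: "nat \<Rightarrow> (nat \<times> bool \<Rightarrow> nat \<times> bool) \<Rightarrow> pxv \<Rightarrow> pxv" where
  "act_V r g v = (let L = map g (walk_pts r v) in
     if is_fwd r L then (fst (hd L), map snd L) else (fst (last L), rev (map snd L)))"

definition act_sV :: "nat \<Rightarrow> (nat \<times> bool \<Rightarrow> nat \<times> bool) \<Rightarrow> pxv \<times> pxv set set \<Rightarrow> pxv \<times> pxv set set" where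
  "act_sV r g p = (act_V r g (fst p), (\<lambda>e. act_V r g ` e) ` snd p)"

end

theory Submission
  imports Defs
begin


definition xb :: "nat \<Rightarrow> (nat \<Rightarrow> bool) \<Rightarrow> nat \<Rightarrow> bool list \<Rightarrow> bool list" where
  "xb r c x e = map (\<lambda>j. e!j \<noteq> c ((x+j) mod r)) [0..<length e]"

lemma length_xb[simp]: "length (xb r c x e) = length e" by (simp add: xb_def)
lemma nth_xb[simp]: "j < length e \<Longrightarrow> xb r c x e ! j = (e!j \<noteq> c ((x+j) mod r))" by (simp add: xb_def)
lemma xb_Nil[simp]: "xb r c x [] = []" by (simp add: xb_def)
lemma xb_Cons[simp]: "xb r c x (a#l) = (a \<noteq> c (x mod r)) # xb r c (Suc x) l"
  by (rule nth_equalityI) (auto simp: nth_Cons split: nat.splits)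
lemma xb_append: "xb r c x (l1 @ l2) = xb r c x l1 @ xb r c (x + length l1) l2"
  by (rule nth_equalityI) (auto simp: nth_append add.assoc)
lemma xb_snoc: "xb r c x (l @ [d]) = xb r c x l @ [d \<noteq> c ((x + length l) mod r)]"
  by (simp add: xb_append)
lemma xb_mod: "xb r c (x mod r) l = xb r c x l"
  by (rule nth_equalityI) (auto simp: mod_simps)
lemma xb_modeq: "x mod r = y mod r \<Longrightarrow> xb r c x l = xb r c y l"
  by (metis xb_mod)
lemma xb_xb[simp]: "xb r c x (xb r c x l) = l"
  by (rule nth_equalityI) auto
lemma xb_inj: "xb r c x l = xb r c x l' \<Longrightarrow> l = l'"
  by (metis xb_xb)
lemma tl_xb: "tl (xb r c x l) = xb r c (Suc x) (tl l)"
  by (cases l) auto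
lemma butlast_xb: "butlast (xb r c x l) = xb r c x (butlast l)"
  by (cases l rule: rev_cases) (auto simp: xb_snoc)
lemma xb_False[simp]: "xb r (\<lambda>_. False) x l = l"
  by (rule nth_equalityI) auto

lemma hd_map_upt0: "0 < n \<Longrightarrow> hd (map f [0..<n]) = f 0"
  by (simp add: hd_map hd_upt)

definition T :: "nat \<Rightarrow> nat \<Rightarrow> (nat \<Rightarrow> bool) \<Rightarrow> pxv \<Rightarrow> pxv" where
  "T r b c v = ((fst v + b) mod r, xb r c (fst v) (snd v))"

definition R :: "nat \<Rightarrow> nat \<Rightarrow> (nat \<Rightarrow> bool) \<Rightarrow> pxv \<Rightarrow> pxv" where
  "R r b c v = ((r - (fst v + length (snd v) - 1) mod r + b) mod r, rev (xb r c (fst v) (snd v)))"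

lemma lvR_int: "0 < r \<Longrightarrow> int ((r - k mod r + b) mod r) = (int b - int k) mod int r"
proof -
  assume r: "0 < r"
  have "k mod r < r" using r by simp
  hence "int (r - k mod r + b) = int r - int k mod int r + int b"
    by (simp add: of_nat_diff zmod_int)
  hence "int ((r - k mod r + b) mod r) = (int r - int k mod int r + int b) mod int r"
    by (metis of_nat_mod)
  also have "\<dots> = (int b - int k) mod int r"
    by (smt (verit) mod_add_self1 mod_diff_right_eq)
  finally show ?thesis .
qed

lemma act_T:
  assumes "0 < r" "length e \<ge> 1"
  shows "act_V r (H_map r False b c) (x, e) = T r b c (x, e)"
proof -
  have n0: "0 < length e" using assms by (cases e) auto
  let ?L = "map (H_map r False b c) (walk_pts r (x, e))"
  have L: "?L = map (\<lambda>j. (((x+j) mod r + b) mod r, e!j \<noteq> c ((x+j) mod r))) [0..<length e]"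
    by (simp add: walk_pts_def H_map_def)
  have fw: "is_fwd r ?L" unfolding is_fwd_def L by (auto simp: mod_simps)
  have "hd ?L = ((x + b) mod r, e!0 \<noteq> c (x mod r))"
    using assms unfolding L by (simp add: hd_map_upt0[OF n0] mod_simps)
  moreover have "map snd ?L = xb r c x e" unfolding L xb_def by simp
  ultimately show ?thesis using fw by (simp add: act_V_def T_def Let_def)
qed

lemma lv_ne:
  fixes r x b :: nat
  assumes "3 \<le> r"
  shows "(r - (x+1) mod r + b) mod r \<noteq> ((r - x mod r + b) mod r + 1) mod r"
proof
  assume eq: "(r - (x+1) mod r + b) mod r = ((r - x mod r + b) mod r + 1) mod r"
  have "int ((r - (x+1) mod r + b) mod r) = (int b - int x - 1) mod int r"
    using lvR_int[of r "x+1" b] assms by (simp add: algebra_simps)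
  moreover have "int (((r - x mod r + b) mod r + 1) mod r) = (int b - int x + 1) mod int r"
  proof -
    have "int (((r - x mod r + b) mod r + 1) mod r) = (int ((r - x mod r + b) mod r) + 1) mod int r"
      by (simp add: zmod_int add.commute)
    also have "\<dots> = ((int b - int x) mod int r + 1) mod int r"
      using lvR_int[of r x b] assms by simp
    also have "\<dots> = (int b - int x + 1) mod int r"
      by (simp add: mod_add_left_eq)
    finally show ?thesis .
  qed
  ultimately have "(int b - int x - 1) mod int r = (int b - int x + 1) mod int r"
    using eq by metis
  hence "int r dvd (int b - int x - 1) - (int b - int x + 1)"
    by (simp only: mod_eq_dvd_iff)
  hence "int r dvd 2" by simp
  hence "r dvd 2" by presburger
  hence "r \<le> 2" by (simp add: dvd_imp_le)
  thus False using assms by simp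
qed

lemma act_R:
  assumes "3 \<le> r" "length e \<ge> 1"
  shows "act_V r (H_map r True b c) (x, e) = R r b c (x, e)"
proof -
  have n0: "0 < length e" using assms by (cases e) auto
  let ?L = "map (H_map r True b c) (walk_pts r (x, e))"
  have L: "?L = map (\<lambda>j. ((r - (x+j) mod r + b) mod r, e!j \<noteq> c ((x+j) mod r))) [0..<length e]"
    by (simp add: walk_pts_def H_map_def)
  have ms: "map snd ?L = xb r c x e" unfolding L xb_def by simp
  show ?thesis
  proof (cases "length e = 1")
    case True
    have fw: "is_fwd r ?L" unfolding is_fwd_def L using True by simp
    have "hd ?L = ((r - x mod r + b) mod r, e!0 \<noteq> c (x mod r))"
      unfolding L by (simp add: hd_map_upt0[OF n0])
    moreover have "rev (xb r c x e) = xb r c x e" using True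
      by (cases e) auto
    ultimately show ?thesis using fw ms True by (simp add: act_V_def R_def Let_def)
  next
    case False
    hence ge2: "length e \<ge> 2" using assms by simp
    have nfw: "\<not> is_fwd r ?L"
    proof
      assume fw: "is_fwd r ?L"
      have "Suc 0 < length ?L" unfolding L using ge2 by simp
      hence "fst (?L ! Suc 0) = (fst (?L ! 0) + 1) mod r" using fw unfolding is_fwd_def by blast
      hence eq: "(r - (x+1) mod r + b) mod r = ((r - x mod r + b) mod r + 1) mod r"
        unfolding L using ge2 n0 by simp
      thus False using lv_ne[OF assms(1)] by blast
    qed
    have eqx: "x + (length e - Suc 0) = x + length e - Suc 0" using n0 by linarith
    have ll: "last [0..<length e] = length e - 1" using n0 by simp
    have "last ?L = ((r - (x + length e - 1) mod r + b) mod r, e!(length e - 1) \<noteq> c ((x + (length e - 1)) mod r))"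
      unfolding L using n0 by (simp add: last_map ll eqx)
    thus ?thesis using nfw ms by (simp add: act_V_def R_def Let_def)
  qed
qed


lemma tl_rev: "tl (rev xs) = rev (butlast xs)"
  by (metis butlast_rev rev_rev_ident)

lemma int_T_lev: "int ((x + b) mod r) = (int x + int b) mod int r"
  by (simp add: zmod_int)

lemma nat_eq_mod_iff: "(a::nat) < r \<Longrightarrow> b < r \<Longrightarrow> A = int a \<Longrightarrow> B = int b \<Longrightarrow>
   (a = b) \<longleftrightarrow> A mod int r = B mod int r"
  by simp

lemma dvd_small_False: "3 \<le> r \<Longrightarrow> int r dvd 2 \<Longrightarrow> False"
proof -
  assume "3 \<le> r" "int r dvd 2"
  hence "r dvd 2" by presburger
  hence "r \<le> 2" by (simp add: dvd_imp_le)
  thus False using \<open>3 \<le> r\<close> by simp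
qed

context
  fixes r s :: nat
  assumes r3: "3 \<le> r" and s1: "1 \<le> s"
begin

lemma r0: "0 < r" using r3 by simp

lemma inV[simp]: "(x, e) \<in> PX_V r s \<longleftrightarrow> x < r \<and> length e = s"
  by (simp add: PX_V_def)

lemma inV': "v \<in> PX_V r s \<longleftrightarrow> fst v < r \<and> length (snd v) = s"
  by (cases v) simp

lemma arc_iff: "PX_arc r s u w \<longleftrightarrow> u \<in> PX_V r s \<and> w \<in> PX_V r s \<and>
   fst w = (fst u + 1) mod r \<and> tl (snd u) = butlast (snd w)"
proof
  assume "PX_arc r s u w" thus "u \<in> PX_V r s \<and> w \<in> PX_V r s \<and>
   fst w = (fst u + 1) mod r \<and> tl (snd u) = butlast (snd w)"
    unfolding PX_arc_def by auto
next
  assume a: "u \<in> PX_V r s \<and> w \<in> PX_V r s \<and>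
   fst w = (fst u + 1) mod r \<and> tl (snd u) = butlast (snd w)"
  hence lu: "length (snd u) = s" and lw: "length (snd w) = s" by (auto simp: inV')
  hence nu: "snd u \<noteq> []" and nw: "snd w \<noteq> []" using s1 by auto
  have "snd u = hd (snd u) # tl (snd u)" using nu by simp
  moreover have "snd w = butlast (snd w) @ [last (snd w)]" using nw by simp
  ultimately show "PX_arc r s u w" unfolding PX_arc_def using a by metis
qed

lemma arc_lev: "PX_arc r s u w \<Longrightarrow> fst w = (fst u + 1) mod r"
  by (simp add: arc_iff)

lemma arc_V: "PX_arc r s u w \<Longrightarrow> u \<in> PX_V r s \<and> w \<in> PX_V r s"
  by (simp add: arc_iff)

lemma succ_ne: "x < r \<Longrightarrow> (x + 1) mod r \<noteq> x"
  using r3 by (metis Suc_eq_plus1 add_diff_cancel_left' mod_less mod_self n_not_Suc_n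
      not_less_eq le_less_Suc_eq le_add1 order.strict_trans2 zero_neq_one Suc_lessI
      mod_Suc numeral_3_eq_3)

lemma succ2_ne: "x < r \<Longrightarrow> ((x + 1) mod r + 1) mod r \<noteq> x"
proof
  assume x: "x < r" and eq: "((x + 1) mod r + 1) mod r = x"
  have "int (((x + 1) mod r + 1) mod r) = (int ((x + 1) mod r) + 1) mod int r"
    by (simp add: zmod_int add.commute)
  also have "\<dots> = ((int x + 1) mod int r + 1) mod int r" by (simp add: zmod_int add.commute)
  also have "\<dots> = (int x + 2) mod int r" by (simp add: mod_add_left_eq add.assoc)
  finally have "(int x + 2) mod int r = int x mod int r" using x eq
    by (metis of_nat_mod mod_less)
  hence "int r dvd (int x + 2) - int x" by (simp only: mod_eq_dvd_iff)
  thus False using dvd_small_False[OF r3] by simp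
qed

lemma arc_ne: "PX_arc r s u w \<Longrightarrow> fst u \<noteq> fst w"
  by (metis arc_iff inV' succ_ne)

lemma arc_not_back: "PX_arc r s u w \<Longrightarrow> \<not> PX_arc r s w u"
  by (metis arc_iff inV' succ2_ne)

lemma adj_ne: "PX_adj r s u w \<Longrightarrow> fst u \<noteq> fst w"
  unfolding PX_adj_def using arc_ne by metis

lemma adj_sym: "PX_adj r s u w \<longleftrightarrow> PX_adj r s w u"
  unfolding PX_adj_def by blast

lemma int_mod_cancel: "(A + c) mod (m::int) = (B + c) mod m \<Longrightarrow> A mod m = B mod m"
  by (simp add: mod_eq_dvd_iff)

lemma lev_cancel: "x < r \<Longrightarrow> y < r \<Longrightarrow> (x + b) mod r = (y + b) mod r \<Longrightarrow> x = y"
proof -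
  assume x: "x < r" and y: "y < r" and e: "(x + b) mod r = (y + b) mod r"
  hence "(int x + int b) mod int r = (int y + int b) mod int r"
    by (metis int_T_lev)
  hence "int x mod int r = int y mod int r" by (rule int_mod_cancel)
  thus "x = y" using x y by (metis of_nat_mod mod_less of_nat_eq_iff)
qed

lemma lev_eq_dvd: "int a = A mod int r \<Longrightarrow> int a' = A' mod int r \<Longrightarrow> (a = a') \<longleftrightarrow> int r dvd (A - A')"
  by (metis mod_eq_dvd_iff of_nat_eq_iff)

lemma repId: "x < r \<Longrightarrow> int x = int x mod int r"
  by (metis of_nat_mod mod_less)

lemma repSucc: "int a = A mod int r \<Longrightarrow> int ((a + 1) mod r) = (A + 1) mod int r"
  by (simp add: zmod_int add.commute mod_add_right_eq)

lemma repR: "int ((r - k mod r + b) mod r) = (int b - int k) mod int r"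
  using lvR_int r0 by blast

lemma succ_dvd: "x' < r \<Longrightarrow> x' = (x + 1) mod r \<longleftrightarrow> int r dvd (int x' - int x - 1)"
proof -
  assume "x' < r"
  have "x' = (x + 1) mod r \<longleftrightarrow> int r dvd (int x' - (int x + 1))"
    by (rule lev_eq_dvd[OF repId[OF \<open>x' < r\<close>]]) (simp add: zmod_int add.commute)
  thus ?thesis by (simp add: algebra_simps)
qed

lemma T_V: "v \<in> PX_V r s \<Longrightarrow> T r b c v \<in> PX_V r s"
  using r0 by (cases v) (simp add: T_def)

lemma T_inj: "inj_on (T r b c) (PX_V r s)"
proof
  fix u w assume u: "u \<in> PX_V r s" and w: "w \<in> PX_V r s" and e: "T r b c u = T r b c w"
  obtain x e1 where ue: "u = (x, e1)" by fastforce
  obtain x' e2 where we: "w = (x', e2)" by fastforce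
  have x: "x < r" and x': "x' < r" using u w ue we by auto
  have "(x + b) mod r = (x' + b) mod r" using e by (simp add: T_def ue we)
  hence "x = x'" using lev_cancel x x' by blast
  moreover have "xb r c x e1 = xb r c x' e2" using e by (simp add: T_def ue we)
  ultimately show "u = w" using ue we xb_inj by blast
qed

lemma T_arc:
  assumes u: "u \<in> PX_V r s" and w: "w \<in> PX_V r s"
  shows "PX_arc r s (T r b c u) (T r b c w) \<longleftrightarrow> PX_arc r s u w"
proof -
  obtain x e where ue: "u = (x, e)" by fastforce
  obtain x' e' where we: "w = (x', e')" by fastforce
  have x: "x < r" and x': "x' < r" using u w ue we by auto
  have l1: "((x' + b) mod r = ((x + b) mod r + 1) mod r) \<longleftrightarrow> int r dvd (int x' - int x - 1)"
  proof -
    have "((x' + b) mod r = ((x + b) mod r + 1) mod r) \<longleftrightarrow> int r dvd ((int x' + int b) - (int x + int b + 1))"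
      by (rule lev_eq_dvd[OF int_T_lev repSucc[OF int_T_lev]])
    thus ?thesis by (simp add: algebra_simps)
  qed
  have l2: "x' = (x + 1) mod r \<Longrightarrow> (tl (xb r c x e) = butlast (xb r c x' e')) \<longleftrightarrow> tl e = butlast e'"
  proof -
    assume "x' = (x + 1) mod r"
    hence "xb r c x' (butlast e') = xb r c (Suc x) (butlast e')" by (simp add: xb_mod)
    thus ?thesis by (simp add: tl_xb butlast_xb) (metis xb_inj)
  qed
  have A1: "PX_arc r s (T r b c u) (T r b c w) \<longleftrightarrow>
     ((x' + b) mod r = ((x + b) mod r + 1) mod r) \<and> tl (xb r c x e) = butlast (xb r c x' e')"
    using T_V[OF u] T_V[OF w] unfolding arc_iff by (simp add: ue we T_def)
  have A2: "PX_arc r s u w \<longleftrightarrow> x' = (x + 1) mod r \<and> tl e = butlast e'"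
    using u w unfolding arc_iff by (simp add: ue we)
  show ?thesis unfolding A1 A2 using l1 l2 succ_dvd[OF x', of x] by blast
qed

lemma T_adj:
  assumes u: "u \<in> PX_V r s" and w: "w \<in> PX_V r s"
  shows "PX_adj r s (T r b c u) (T r b c w) \<longleftrightarrow> PX_adj r s u w"
  using T_arc[OF u w] T_arc[OF w u] by (simp add: PX_adj_def)

lemma R_V: "v \<in> PX_V r s \<Longrightarrow> R r b c v \<in> PX_V r s"
  using r0 by (cases v) (simp add: R_def)

lemma int_xs: "length e = s \<Longrightarrow> int (x + length e - 1) = int x + int s - 1"
  using s1 by simp

lemma R_inj: "inj_on (R r b c) (PX_V r s)"
proof
  fix u w assume u: "u \<in> PX_V r s" and w: "w \<in> PX_V r s" and e: "R r b c u = R r b c w"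
  obtain x e1 where ue: "u = (x, e1)" by fastforce
  obtain x' e2 where we: "w = (x', e2)" by fastforce
  have x: "x < r" and x': "x' < r" and l1: "length e1 = s" and l2: "length e2 = s"
    using u w ue we by auto
  have "(r - (x + length e1 - 1) mod r + b) mod r = (r - (x' + length e2 - 1) mod r + b) mod r"
    using e by (simp add: R_def ue we)
  hence "int r dvd ((int b - int (x + length e1 - 1)) - (int b - int (x' + length e2 - 1)))"
    using lev_eq_dvd[OF repR repR] by blast
  hence "int r dvd (int x' - int x)" using int_xs[OF l1, of x] int_xs[OF l2, of x'] by simp
  hence "x = x'" using x x' lev_eq_dvd[OF repId[OF x] repId[OF x']]
    by (simp add: dvd_diff_commute)
  moreover have "e1 = e2" using e calculation by (simp add: R_def ue we) (metis xb_inj)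
  ultimately show "u = w" by (simp add: ue we)
qed

lemma R_arc:
  assumes u: "u \<in> PX_V r s" and w: "w \<in> PX_V r s"
  shows "PX_arc r s (R r b c w) (R r b c u) \<longleftrightarrow> PX_arc r s u w"
proof -
  obtain x e where ue: "u = (x, e)" by fastforce
  obtain x' e' where we: "w = (x', e')" by fastforce
  have x: "x < r" and x': "x' < r" and le: "length e = s" and le': "length e' = s"
    using u w ue we by auto
  have l1: "((r - (x + length e - 1) mod r + b) mod r = ((r - (x' + length e' - 1) mod r + b) mod r + 1) mod r)
      \<longleftrightarrow> int r dvd (int x' - int x - 1)"
  proof -
    have "((r - (x + length e - 1) mod r + b) mod r = ((r - (x' + length e' - 1) mod r + b) mod r + 1) mod r)
      \<longleftrightarrow> int r dvd ((int b - int (x + length e - 1)) - (int b - int (x' + length e' - 1) + 1))"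
      by (rule lev_eq_dvd[OF repR repSucc[OF repR]])
    also have "(int b - int (x + length e - 1)) - (int b - int (x' + length e' - 1) + 1) = int x' - int x - 1"
      using int_xs[OF le, of x] int_xs[OF le', of x'] by simp
    finally show ?thesis .
  qed
  have l2: "x' = (x + 1) mod r \<Longrightarrow> (tl (rev (xb r c x' e')) = butlast (rev (xb r c x e))) \<longleftrightarrow> tl e = butlast e'"
  proof -
    assume "x' = (x + 1) mod r"
    hence "xb r c x' (butlast e') = xb r c (Suc x) (butlast e')" by (simp add: xb_mod)
    thus ?thesis by (simp add: tl_xb butlast_xb tl_rev butlast_rev) (metis xb_inj)
  qed
  have A1: "PX_arc r s (R r b c w) (R r b c u) \<longleftrightarrow>
     ((r - (x + length e - 1) mod r + b) mod r = ((r - (x' + length e' - 1) mod r + b) mod r + 1) mod r)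
      \<and> tl (rev (xb r c x' e')) = butlast (rev (xb r c x e))"
    using R_V[OF u] R_V[OF w] r0 unfolding arc_iff by (simp add: ue we R_def)
  have A2: "PX_arc r s u w \<longleftrightarrow> x' = (x + 1) mod r \<and> tl e = butlast e'"
    using u w unfolding arc_iff by (simp add: ue we)
  show ?thesis unfolding A1 A2 using l1 l2 succ_dvd[OF x', of x] by blast
qed

lemma R_adj:
  assumes u: "u \<in> PX_V r s" and w: "w \<in> PX_V r s"
  shows "PX_adj r s (R r b c u) (R r b c w) \<longleftrightarrow> PX_adj r s u w"
  using R_arc[OF u w] R_arc[OF w u] by (auto simp: PX_adj_def)

end


definition ca :: "nat \<Rightarrow> nat \<Rightarrow> bool list \<Rightarrow> pxv" where "ca r x h = (x, False # h)"
definition cb :: "nat \<Rightarrow> nat \<Rightarrow> bool list \<Rightarrow> pxv" where "cb r x h = ((x + 1) mod r, h @ [False])"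
definition cc :: "nat \<Rightarrow> nat \<Rightarrow> bool list \<Rightarrow> pxv" where "cc r x h = (x, True # h)"
definition cd :: "nat \<Rightarrow> nat \<Rightarrow> bool list \<Rightarrow> pxv" where "cd r x h = ((x + 1) mod r, h @ [True])"

lemma cyc_eq: "PX_cyc r x h = {{ca r x h, cb r x h}, {cb r x h, cc r x h}, {cc r x h, cd r x h}, {cd r x h, ca r x h}}"
  by (simp add: PX_cyc_def Let_def ca_def cb_def cc_def cd_def)

lemma cyc_verts: "\<Union>(PX_cyc r x h) = {ca r x h, cb r x h, cc r x h, cd r x h}"
  unfolding cyc_eq by auto

definition Cp :: "nat \<Rightarrow> pxv \<Rightarrow> pxv set set" where
  "Cp r v = PX_cyc r (fst v) (tl (snd v))"
definition Cm :: "nat \<Rightarrow> pxv \<Rightarrow> pxv set set" where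
  "Cm r v = PX_cyc r ((fst v + r - 1) mod r) (butlast (snd v))"

lemma tl_char: "length e = Suc (length h) \<Longrightarrow> (e = False # h \<or> e = True # h) \<longleftrightarrow> tl e = h"
  by (cases e) auto

lemma butlast_char: "length e = Suc (length h) \<Longrightarrow> (e = h @ [False] \<or> e = h @ [True]) \<longleftrightarrow> butlast e = h"
  by (cases e rule: rev_cases) auto

context
  fixes r s :: nat
  assumes r3: "3 \<le> r" and s1: "1 \<le> s"
begin

lemmas inVc_c[simp] = inV[OF r3 s1]
lemmas inVc_c' = inV'[OF r3 s1]

lemma pred_succ: "y < r \<Longrightarrow> ((y + r - 1) mod r + 1) mod r = y"
proof -
  assume y: "y < r"
  have "((y + r - 1) mod r + 1) mod r = (y + r - 1 + 1) mod r" by (simp add: mod_simps)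
  also have "y + r - 1 + 1 = y + r" using r3 by simp
  finally show ?thesis using y by simp
qed

lemma succ_pred: "x < r \<Longrightarrow> ((x + 1) mod r + r - 1) mod r = x"
proof -
  assume x: "x < r"
  have "((x + 1) mod r + r - 1) mod r = ((x + 1) mod r + (r - 1)) mod r" using r3 by simp
  also have "\<dots> = (x + 1 + (r - 1)) mod r" by (simp add: mod_simps)
  also have "x + 1 + (r - 1) = x + r" using r3 by simp
  finally show ?thesis using x by simp
qed

lemma succ_iff_pred: "x < r \<Longrightarrow> y < r \<Longrightarrow> (x + 1) mod r = y \<longleftrightarrow> x = (y + r - 1) mod r"
  using pred_succ succ_pred by metis

lemma mem_cyc:
  assumes x: "x < r" and h: "length h = s - 1" and v: "(y, e) \<in> PX_V r s"
  shows "(y, e) \<in> \<Union>(PX_cyc r x h) \<longleftrightarrow> (y = x \<and> tl e = h) \<or> (y = (x + 1) mod r \<and> butlast e = h)"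
proof -
  have le: "length e = Suc (length h)" using v h s1 by simp
  show ?thesis unfolding cyc_verts using tl_char[OF le] butlast_char[OF le]
    by (auto simp: ca_def cb_def cc_def cd_def)
qed

lemma mem_cyc':
  assumes x: "x < r" and h: "length h = s - 1" and v: "v \<in> PX_V r s"
  shows "v \<in> \<Union>(PX_cyc r x h) \<longleftrightarrow> (fst v = x \<and> tl (snd v) = h) \<or> (fst v = (x + 1) mod r \<and> butlast (snd v) = h)"
  using mem_cyc[OF x h, of "fst v" "snd v"] v by simp

lemma cyc_V: "x < r \<Longrightarrow> length h = s - 1 \<Longrightarrow> \<Union>(PX_cyc r x h) \<subseteq> PX_V r s"
  unfolding cyc_verts using s1 r3 by (auto simp: ca_def cb_def cc_def cd_def)

lemma S_iff: "C \<in> PX_S r s \<longleftrightarrow> (\<exists>x h. x < r \<and> length h = s - 1 \<and> C = PX_cyc r x h)"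
  unfolding PX_S_def by blast

lemma S_V: "C \<in> PX_S r s \<Longrightarrow> \<Union>C \<subseteq> PX_V r s"
proof -
  assume "C \<in> PX_S r s"
  then obtain x h where "x < r" "length h = s - 1" "C = PX_cyc r x h" unfolding S_iff by blast
  thus ?thesis using cyc_V by blast
qed

lemma cyc_sub:
  assumes x: "x < r" and h: "length h = s - 1" and x': "x' < r" and h': "length h' = s - 1"
    and sub: "\<Union>(PX_cyc r x h) \<subseteq> \<Union>(PX_cyc r x' h')"
  shows "x = x' \<and> h = h'"
proof -
  have V: "\<Union>(PX_cyc r x h) \<subseteq> PX_V r s" by (rule cyc_V[OF x h])
  have a: "ca r x h \<in> \<Union>(PX_cyc r x' h')" and b: "cb r x h \<in> \<Union>(PX_cyc r x' h')"
    using sub unfolding cyc_verts by blast+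
  have aV: "ca r x h \<in> PX_V r s" and bV: "cb r x h \<in> PX_V r s" using V unfolding cyc_verts by blast+
  have A: "(x = x' \<and> h = h') \<or> (x = (x' + 1) mod r \<and> butlast (False # h) = h')"
    using a mem_cyc'[OF x' h' aV] unfolding ca_def by simp
  have B: "((x + 1) mod r = x' \<and> tl (h @ [False]) = h') \<or> ((x + 1) mod r = (x' + 1) mod r)"
    using b mem_cyc'[OF x' h' bV] unfolding cb_def by auto
  show ?thesis
  proof (rule ccontr)
    assume n: "\<not> (x = x' \<and> h = h')"
    hence xe: "x = (x' + 1) mod r" using A by blast
    show False using B
    proof
      assume "(x + 1) mod r = x' \<and> tl (h @ [False]) = h'"
      hence e2: "(x + 1) mod r = x'" by blast
      have "((x' + 1) mod r + 1) mod r = x'" using e2 unfolding xe .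
      thus False using succ2_ne[OF r3 s1 x'] by simp
    next
      assume "(x + 1) mod r = (x' + 1) mod r"
      hence "x = x'" using lev_cancel[OF r3 s1 x x'] by blast
      thus False using xe succ_ne[OF r3 s1 x'] by metis
    qed
  qed
qed

lemma S_sub: "C \<in> PX_S r s \<Longrightarrow> D \<in> PX_S r s \<Longrightarrow> \<Union>C \<subseteq> \<Union>D \<Longrightarrow> C = D"
proof -
  assume C: "C \<in> PX_S r s" and D: "D \<in> PX_S r s" and sub: "\<Union>C \<subseteq> \<Union>D"
  obtain x h where "x < r" "length h = s - 1" "C = PX_cyc r x h" using C unfolding S_iff by blast
  moreover obtain x' h' where "x' < r" "length h' = s - 1" "D = PX_cyc r x' h'" using D unfolding S_iff by blast
  ultimately show ?thesis using cyc_sub sub by blast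
qed

lemma vfacts: "v \<in> PX_V r s \<Longrightarrow> fst v < r \<and> length (tl (snd v)) = s - 1 \<and> length (butlast (snd v)) = s - 1
   \<and> (fst v + r - 1) mod r < r"
  using r3 by (simp add: inVc_c')

lemma Cp_S: "v \<in> PX_V r s \<Longrightarrow> Cp r v \<in> PX_S r s"
  unfolding S_iff Cp_def using vfacts by blast

lemma Cm_S: "v \<in> PX_V r s \<Longrightarrow> Cm r v \<in> PX_S r s"
  unfolding S_iff Cm_def using vfacts by blast

lemma in_Cp: "v \<in> PX_V r s \<Longrightarrow> v \<in> \<Union>(Cp r v)"
  unfolding Cp_def using vfacts mem_cyc' by blast

lemma in_Cm: "v \<in> PX_V r s \<Longrightarrow> v \<in> \<Union>(Cm r v)"
proof -
  assume v: "v \<in> PX_V r s"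
  have "fst v = ((fst v + r - 1) mod r + 1) mod r" using pred_succ vfacts[OF v] by simp
  thus ?thesis unfolding Cm_def using vfacts[OF v] mem_cyc'[OF _ _ v] by blast
qed

lemma Cp_ne_Cm: "v \<in> PX_V r s \<Longrightarrow> Cp r v \<noteq> Cm r v"
proof
  assume v: "v \<in> PX_V r s" and e: "Cp r v = Cm r v"
  have "fst v = (fst v + r - 1) mod r"
    using cyc_sub[of "fst v" "tl (snd v)" "(fst v + r - 1) mod r" "butlast (snd v)"] e vfacts[OF v]
    unfolding Cp_def Cm_def by blast
  hence "(fst v + 1) mod r = fst v" using pred_succ v by (metis inVc_c')
  thus False using succ_ne[OF r3 s1] v by (metis inVc_c')
qed

lemma cyc_cases: "C \<in> PX_S r s \<Longrightarrow> v \<in> PX_V r s \<Longrightarrow> v \<in> \<Union>C \<Longrightarrow> C = Cp r v \<or> C = Cm r v"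
proof -
  assume C: "C \<in> PX_S r s" and v: "v \<in> PX_V r s" and vC: "v \<in> \<Union>C"
  obtain x h where x: "x < r" and h: "length h = s - 1" and Ce: "C = PX_cyc r x h"
    using C S_iff by blast
  have "(fst v = x \<and> tl (snd v) = h) \<or> (fst v = (x + 1) mod r \<and> butlast (snd v) = h)"
    using mem_cyc'[OF x h v] vC Ce by simp
  thus ?thesis
  proof
    assume "fst v = x \<and> tl (snd v) = h" thus ?thesis by (simp add: Ce Cp_def)
  next
    assume a: "fst v = (x + 1) mod r \<and> butlast (snd v) = h"
    hence "x = (fst v + r - 1) mod r" using succ_iff_pred x v by (metis inVc_c')
    thus ?thesis using a by (simp add: Ce Cm_def)
  qed
qed

lemma arc_C: "PX_arc r s u w \<Longrightarrow> Cp r u = Cm r w"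
proof -
  assume a: "PX_arc r s u w"
  hence "fst w = (fst u + 1) mod r" "tl (snd u) = butlast (snd w)" "fst u < r"
    by (auto simp: arc_iff[OF r3 s1] inVc_c')
  moreover have "fst u = (fst w + r - 1) mod r" using calculation succ_pred by simp
  ultimately show ?thesis by (simp add: Cp_def Cm_def)
qed

lemma L1: "v \<in> PX_V r s \<Longrightarrow> w \<in> \<Union>(Cp r v) \<Longrightarrow> PX_adj r s v w \<Longrightarrow> PX_arc r s v w"
proof -
  assume v: "v \<in> PX_V r s" and w: "w \<in> \<Union>(Cp r v)" and ad: "PX_adj r s v w"
  have wV: "w \<in> PX_V r s" using ad unfolding PX_adj_def by (auto dest: arc_V[OF r3 s1])
  have "(fst w = fst v \<and> tl (snd w) = tl (snd v)) \<or> (fst w = (fst v + 1) mod r \<and> butlast (snd w) = tl (snd v))"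
    using w mem_cyc'[of "fst v" "tl (snd v)" w] v wV unfolding Cp_def by (simp add: inVc_c')
  moreover have "fst w \<noteq> fst v" using adj_ne[OF r3 s1 ad] by simp
  ultimately show ?thesis using v wV by (simp add: arc_iff[OF r3 s1])
qed

lemma L2: "v \<in> PX_V r s \<Longrightarrow> w \<in> \<Union>(Cm r v) \<Longrightarrow> PX_adj r s v w \<Longrightarrow> PX_arc r s w v"
proof -
  assume v: "v \<in> PX_V r s" and w: "w \<in> \<Union>(Cm r v)" and ad: "PX_adj r s v w"
  have wV: "w \<in> PX_V r s" using ad unfolding PX_adj_def by (auto dest: arc_V[OF r3 s1])
  have fv: "fst v < r" using v by (simp add: inVc_c')
  have "(fst w = (fst v + r - 1) mod r \<and> tl (snd w) = butlast (snd v)) \<or>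
        (fst w = ((fst v + r - 1) mod r + 1) mod r \<and> butlast (snd w) = butlast (snd v))"
    using w mem_cyc'[of "(fst v + r - 1) mod r" "butlast (snd v)" w] v wV r3 unfolding Cm_def by (simp add: inVc_c')
  moreover have "fst w \<noteq> fst v" using adj_ne[OF r3 s1 ad] by simp
  ultimately have "fst w = (fst v + r - 1) mod r \<and> tl (snd w) = butlast (snd v)"
    using pred_succ[OF fv] by auto
  thus ?thesis using v wV pred_succ[OF fv] by (simp add: arc_iff[OF r3 s1])
qed

end


lemma four:
  assumes d: "distinct [a,b,c,d]" and ab: "Rel a b" and bc: "Rel b c" and cd: "Rel c d" and da: "Rel d a"
   and sym: "\<And>x y. Rel x y \<Longrightarrow> Rel y x" and nac: "\<not> Rel a c" and nbd: "\<not> Rel b d"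
   and irr: "\<And>x. \<not> Rel x x"
   and x: "x \<in> {a,b,c,d}" and y: "y \<in> {a,b,c,d}" and xy: "Rel x y"
  shows "\<exists>u\<in>{a,b,c,d}. \<exists>w\<in>{a,b,c,d}. distinct [x,y,u,w] \<and> Rel y u \<and> Rel u w \<and> Rel w x"
proof -
  have ba: "Rel b a" "Rel c b" "Rel d c" "Rel a d" using sym ab bc cd da by auto
  have nca: "\<not> Rel c a" "\<not> Rel d b" using sym nac nbd by blast+
  show ?thesis using x y xy d ab bc cd da ba nac nbd nca irr
    by simp (elim disjE; simp; blast)
qed

definition sq :: "nat \<Rightarrow> nat \<Rightarrow> (pxv \<times> pxv set set) \<Rightarrow> (pxv \<times> pxv set set) \<Rightarrow> bool" where
  "sq r s p q \<longleftrightarrow> (\<exists>u\<in>sPX_V r s. \<exists>w\<in>sPX_V r s. distinct [p,q,u,w] \<and>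
      sPX_adj r s q u \<and> sPX_adj r s u w \<and> sPX_adj r s w p)"

lemma SV_iff: "p \<in> sPX_V r s \<longleftrightarrow> snd p \<in> PX_S r s \<and> fst p \<in> \<Union>(snd p)"
  by (cases p) (simp add: sPX_V_def split_V_def)

lemma adjS_iff: "sPX_adj r s p q \<longleftrightarrow> (snd p \<noteq> snd q \<and> fst p = fst q) \<or> (snd p = snd q \<and> PX_adj r s (fst p) (fst q))"
  by (simp add: sPX_adj_def split_adj_def)

context
  fixes r s :: nat
  assumes r3: "3 \<le> r" and s1: "1 \<le> s"
begin

lemmas inVc_d[simp] = inV[OF r3 s1]
lemmas inVc_d' = inV'[OF r3 s1]

lemma cyc_adj:
  assumes x: "x < r" and h: "length h = s - 1"
  shows "PX_arc r s (ca r x h) (cb r x h)" "PX_arc r s (ca r x h) (cd r x h)"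
        "PX_arc r s (cc r x h) (cb r x h)" "PX_arc r s (cc r x h) (cd r x h)"
proof -
  have V: "ca r x h \<in> PX_V r s" "cb r x h \<in> PX_V r s" "cc r x h \<in> PX_V r s" "cd r x h \<in> PX_V r s"
    using cyc_V[OF r3 s1 x h] unfolding cyc_verts by auto
  show "PX_arc r s (ca r x h) (cb r x h)" "PX_arc r s (ca r x h) (cd r x h)"
        "PX_arc r s (cc r x h) (cb r x h)" "PX_arc r s (cc r x h) (cd r x h)"
    using V x unfolding arc_iff[OF r3 s1] by (auto simp: ca_def cb_def cc_def cd_def)
qed

lemma cyc_distinct:
  assumes x: "x < r" and h: "length h = s - 1"
  shows "distinct [ca r x h, cb r x h, cc r x h, cd r x h]"
  using succ_ne[OF r3 s1 x] by (auto simp: ca_def cb_def cc_def cd_def)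

lemma cyc_sq:
  assumes x: "x < r" and h: "length h = s - 1"
    and a: "a \<in> \<Union>(PX_cyc r x h)" and b: "b \<in> \<Union>(PX_cyc r x h)" and ab: "PX_adj r s a b"
  shows "\<exists>u\<in>\<Union>(PX_cyc r x h). \<exists>w\<in>\<Union>(PX_cyc r x h). distinct [a,b,u,w] \<and>
     PX_adj r s b u \<and> PX_adj r s u w \<and> PX_adj r s w a"
proof -
  note A = cyc_adj[OF x h]
  have V: "\<Union>(PX_cyc r x h) \<subseteq> PX_V r s" using cyc_V[OF r3 s1 x h] .
  have nac: "\<not> PX_adj r s (ca r x h) (cc r x h)" using adj_ne[OF r3 s1] by (force simp: ca_def cc_def)
  have nbd: "\<not> PX_adj r s (cb r x h) (cd r x h)" using adj_ne[OF r3 s1] by (force simp: cb_def cd_def)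
  show ?thesis unfolding cyc_verts
    apply (rule four[where Rel="PX_adj r s"])
    using cyc_distinct[OF x h] A nac nbd a b ab adj_ne[OF r3 s1] unfolding cyc_verts
    by (auto simp: PX_adj_def)
qed

lemma SV_v: "p \<in> sPX_V r s \<Longrightarrow> fst p \<in> PX_V r s"
  using S_V[OF r3 s1] by (auto simp: SV_iff)

lemma SV_pair: "v \<in> PX_V r s \<Longrightarrow> (v, C) \<in> sPX_V r s \<longleftrightarrow> C = Cp r v \<or> C = Cm r v"
  unfolding SV_iff fst_conv snd_conv
  using cyc_cases[OF r3 s1, of C v] Cp_S[OF r3 s1, of v] Cm_S[OF r3 s1, of v] in_Cp[OF r3 s1, of v] in_Cm[OF r3 s1, of v]
  by blast

lemma sq_same:
  assumes p: "p \<in> sPX_V r s" and q: "q \<in> sPX_V r s" and pq: "sPX_adj r s p q" and e: "snd p = snd q"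
  shows "sq r s p q"
proof -
  obtain x h where x: "x < r" and h: "length h = s - 1" and C: "snd p = PX_cyc r x h"
    using p unfolding SV_iff S_iff[OF r3 s1] by blast
  have a: "fst p \<in> \<Union>(PX_cyc r x h)" and b: "fst q \<in> \<Union>(PX_cyc r x h)"
    using p q e C by (auto simp: SV_iff)
  have ab: "PX_adj r s (fst p) (fst q)" using pq e by (simp add: adjS_iff)
  obtain u w where u: "u \<in> \<Union>(PX_cyc r x h)" and w: "w \<in> \<Union>(PX_cyc r x h)"
    and d: "distinct [fst p, fst q, u, w]" and A: "PX_adj r s (fst q) u" "PX_adj r s u w" "PX_adj r s w (fst p)"
    using cyc_sq[OF x h a b ab] by blast
  have "(u, snd p) \<in> sPX_V r s" "(w, snd p) \<in> sPX_V r s"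
    using u w p C by (auto simp: SV_iff)
  moreover have "distinct [p, q, (u, snd p), (w, snd p)]"
    using d e by (cases p, cases q) auto
  moreover have "sPX_adj r s q (u, snd p)" "sPX_adj r s (u, snd p) (w, snd p)" "sPX_adj r s (w, snd p) p"
    using A e by (auto simp: adjS_iff)
  ultimately show ?thesis unfolding sq_def by blast
qed

lemma sq_diff:
  assumes p: "p \<in> sPX_V r s" and q: "q \<in> sPX_V r s" and pq: "sPX_adj r s p q" and e: "snd p \<noteq> snd q"
  shows "\<not> sq r s p q"
proof
  assume "sq r s p q"
  then obtain u w where u: "u \<in> sPX_V r s" and w: "w \<in> sPX_V r s" and d: "distinct [p,q,u,w]"
    and qu: "sPX_adj r s q u" and uw: "sPX_adj r s u w" and wp: "sPX_adj r s w p"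
    unfolding sq_def by blast
  have fe: "fst p = fst q" using pq e by (simp add: adjS_iff)
  define v where "v = fst p"
  have v: "v \<in> PX_V r s" using SV_v p v_def by blast
  have pc: "snd p = Cp r v \<or> snd p = Cm r v" using p v SV_pair[OF v, of "snd p"] v_def by (cases p) auto
  have qc: "snd q = Cp r v \<or> snd q = Cm r v" using q v SV_pair[OF v, of "snd q"] v_def fe by (cases q) auto
  have u2: "snd u = snd q \<and> PX_adj r s v (fst u)"
  proof (rule ccontr)
    assume "\<not> ?thesis"
    hence "snd q \<noteq> snd u \<and> fst q = fst u" using qu fe v_def by (auto simp: adjS_iff)
    moreover have "snd u = Cp r v \<or> snd u = Cm r v" using u SV_pair[OF v, of "snd u"] calculation fe v_def
      by (cases u) auto
    ultimately have "u = p" using pc qc e fe v_def by (cases u, cases p) auto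
    thus False using d by simp
  qed
  have w2: "snd w = snd p \<and> PX_adj r s v (fst w)"
  proof (rule ccontr)
    assume "\<not> ?thesis"
    hence "snd w \<noteq> snd p \<and> fst w = fst p" using wp v_def adj_sym[OF r3 s1] by (auto simp: adjS_iff)
    moreover have "snd w = Cp r v \<or> snd w = Cm r v" using w SV_pair[OF v, of "snd w"] calculation v_def
      by (cases w) auto
    ultimately have "w = q" using pc qc e fe v_def by (cases w, cases q) auto
    thus False using d by simp
  qed
  have m: "fst u = fst w" using uw u2 w2 e by (auto simp: adjS_iff)
  define m' where "m' = fst u"
  have mC: "m' \<in> \<Union>(snd p)" "m' \<in> \<Union>(snd q)"
    using u w u2 w2 m m'_def by (auto simp: SV_iff)
  have "m' \<in> \<Union>(Cp r v)" "m' \<in> \<Union>(Cm r v)" using mC pc qc e by auto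
  moreover have "PX_adj r s v m'" using u2 m'_def by simp
  ultimately have "PX_arc r s v m'" "PX_arc r s m' v" using L1[OF r3 s1 v] L2[OF r3 s1 v] by blast+
  thus False using arc_not_back[OF r3 s1] by blast
qed

lemma sq_iff:
  assumes p: "p \<in> sPX_V r s" and q: "q \<in> sPX_V r s" and pq: "sPX_adj r s p q"
  shows "sq r s p q \<longleftrightarrow> snd p = snd q"
  using sq_same[OF p q pq] sq_diff[OF p q pq] by blast

end


lemma butlast_replicate': "butlast (replicate n x) = replicate (n - 1) x"
  by (metis butlast_rev rev_replicate tl_replicate)

fun wk :: "nat \<Rightarrow> nat \<Rightarrow> nat \<Rightarrow> pxv \<Rightarrow> pxv \<Rightarrow> bool" where
  "wk r s 0 u w = (u = w)"
| "wk r s (Suc k) u w = (\<exists>m. wk r s k u m \<and> PX_arc r s m w)"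

lemma wk_pres:
  assumes "\<And>u w. PX_arc r s u w \<Longrightarrow> PX_arc r s (F u) (F w)"
  shows "wk r s k u w \<Longrightarrow> wk r s k (F u) (F w)"
proof (induction k arbitrary: w)
  case 0 thus ?case by simp
next
  case (Suc k)
  then obtain m where "wk r s k u m" "PX_arc r s m w" by auto
  hence "wk r s k (F u) (F m)" "PX_arc r s (F m) (F w)" using Suc.IH assms by auto
  thus ?case unfolding wk.simps by blast
qed

lemma wk_inv:
  assumes "\<And>u w. PX_arc r s u w \<Longrightarrow> (P u \<longleftrightarrow> P w)"
  shows "wk r s k u w \<Longrightarrow> P u \<longleftrightarrow> P w"
proof (induction k arbitrary: w)
  case 0 thus ?case by simp
next
  case (Suc k)
  then obtain m where "wk r s k u m" "PX_arc r s m w" by auto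
  thus ?case using Suc.IH assms by blast
qed

context
  fixes r s :: nat
  assumes r3: "3 \<le> r" and s1: "1 \<le> s"
begin

lemmas inVc_e[simp] = inV[OF r3 s1]
lemmas inVc_e' = inV'[OF r3 s1]
lemmas arcI_e = arc_iff[OF r3 s1]

lemma wk_bits:
  "wk r s k u w \<Longrightarrow> u \<in> PX_V r s \<Longrightarrow> j + k < s \<Longrightarrow> snd w ! j = snd u ! (j + k)"
proof (induction k arbitrary: w j)
  case 0 thus ?case by simp
next
  case (Suc k)
  then obtain m where m: "wk r s k u m" and a: "PX_arc r s m w" by auto
  have mV: "m \<in> PX_V r s" and wV: "w \<in> PX_V r s" using a arcI_e by auto
  have t: "tl (snd m) = butlast (snd w)" using a arcI_e by auto
  have lm: "length (snd m) = s" and lw: "length (snd w) = s" using mV wV inVc_e' by auto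
  have "snd w ! j = butlast (snd w) ! j" using Suc.prems lw by (simp add: nth_butlast)
  also have "\<dots> = tl (snd m) ! j" using t by simp
  also have "\<dots> = snd m ! Suc j" using Suc.prems lm by (simp add: nth_tl)
  also have "\<dots> = snd u ! (Suc j + k)" using Suc.IH[OF m Suc.prems(2)] Suc.prems by simp
  finally show ?case by simp
qed

lemma wk_exists:
  assumes x: "x < r" and e: "length e = s"
  shows "length t \<le> s \<Longrightarrow> wk r s (length t) (x, e) ((x + length t) mod r, drop (length t) e @ t)"
proof (induction t rule: rev_induct)
  case Nil thus ?case using x by simp
next
  case (snoc d t)
  define k where "k = length t"
  have k: "k < s" using snoc.prems k_def by simp
  have IH: "wk r s k (x, e) ((x + k) mod r, drop k e @ t)" using snoc k_def by simp
  have ne: "drop k e \<noteq> []" using k e by simp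
  have "PX_arc r s ((x + k) mod r, drop k e @ t) ((x + Suc k) mod r, drop (Suc k) e @ t @ [d])"
    unfolding arcI_e using r3 e k k_def ne
    by (auto simp: mod_simps tl_drop drop_Suc butlast_append)
  thus ?case using IH k_def by auto
qed

lemma conn:
  assumes P: "\<And>u w. PX_arc r s u w \<Longrightarrow> (P u \<longleftrightarrow> P w)" and v: "v \<in> PX_V r s"
  shows "P v \<longleftrightarrow> P (0, replicate s False)"
proof -
  obtain x e where ve: "v = (x, e)" by fastforce
  have x: "x < r" and e: "length e = s" using v ve by auto
  have "wk r s (length (replicate s False)) (x, e) ((x + s) mod r, drop s e @ replicate s False)"
    using wk_exists[OF x e, of "replicate s False"] by simp
  hence 1: "P v \<longleftrightarrow> P ((x + s) mod r, replicate s False)"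
    using wk_inv[of r s P, OF P] ve e by simp
  have 2: "P (z mod r, replicate s False) \<longleftrightarrow> P (0, replicate s False)" for z
  proof (induction z)
    case 0 thus ?case by simp
  next
    case (Suc z)
    have "PX_arc r s (z mod r, replicate s False) (Suc z mod r, replicate s False)"
      unfolding arcI_e using r3 by (auto simp: mod_simps butlast_replicate')
    thus ?case using Suc P by blast
  qed
  show ?thesis using 1 2 by simp
qed

end


context
  fixes r s :: nat
  assumes r3: "3 \<le> r" and s1: "1 \<le> s" and sr: "s \<le> r - 1"
begin

lemmas inVc_f[simp] = inV[OF r3 s1]
lemmas inVc_f' = inV'[OF r3 s1]
lemmas arcI_f = arc_iff[OF r3 s1]

lemma digraph_aut:
  assumes FV: "\<And>v. v \<in> PX_V r s \<Longrightarrow> F v \<in> PX_V r s"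
    and inj: "inj_on F (PX_V r s)"
    and arcs: "\<And>u w. PX_arc r s u w \<Longrightarrow> PX_arc r s (F u) (F w)"
  shows "\<exists>b<r. \<exists>c. \<forall>v\<in>PX_V r s. F v = T r b c v"
proof -
  define zs where "zs = replicate (s - 1) False"
  define v0 where "v0 = (0::nat, replicate s False)"
  have v0V: "v0 \<in> PX_V r s" using r3 by (simp add: v0_def)
  define b where "b = fst (F v0)"
  have b: "b < r" using FV[OF v0V] inVc_f' b_def by auto
  have lev: "fst (F v) = (fst v + b) mod r" if v: "v \<in> PX_V r s" for v
  proof -
    have "fst (F v) = (fst v + b) mod r \<longleftrightarrow> fst (F v0) = (fst v0 + b) mod r"
      using conn[OF r3 s1 _ v, of "\<lambda>v. fst (F v) = (fst v + b) mod r"]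
    proof -
      have "fst (F u) = (fst u + b) mod r \<longleftrightarrow> fst (F w) = (fst w + b) mod r" if a: "PX_arc r s u w" for u w
      proof -
        have uw: "u \<in> PX_V r s" "w \<in> PX_V r s" using a arcI_f by auto
        have fa: "PX_arc r s (F u) (F w)" using arcs a by blast
        have l1: "fst w = (fst u + 1) mod r" using a arcI_f by auto
        have l2: "fst (F w) = (fst (F u) + 1) mod r" using fa arcI_f by auto
        have Fu: "fst (F u) < r" using FV uw inVc_f' by blast
        show ?thesis
        proof
          assume "fst (F u) = (fst u + b) mod r"
          thus "fst (F w) = (fst w + b) mod r" using l1 l2 by (simp add: mod_simps)
        next
          assume "fst (F w) = (fst w + b) mod r"
          hence "(fst (F u) + 1) mod r = ((fst u + b) mod r + 1) mod r" using l1 l2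
            by (simp add: mod_simps add.commute add.left_commute)
          thus "fst (F u) = (fst u + b) mod r"
            using lev_cancel[OF r3 s1 Fu, of "(fst u + b) mod r" 1] r3 by simp
        qed
      qed
      thus ?thesis using conn[OF r3 s1 _ v, of "\<lambda>v. fst (F v) = (fst v + b) mod r"] v0_def by blast
    qed
    moreover have "fst (F v0) = (fst v0 + b) mod r" using b by (simp add: b_def v0_def)
    ultimately show ?thesis by blast
  qed
  define \<beta> where "\<beta> y i = hd (snd (F (y, i # zs)))" for y i
  have wd: "hd (snd (F (y, i # h))) = \<beta> y i" if yh: "(y, i # h) \<in> PX_V r s" for y i h
  proof -
    have y: "y < r" and lh: "length h = s - 1" using yh by auto
    define w where "w = ((y + r - (s - 1)) mod r, replicate (s - 1) False @ [i])"
    have wV: "w \<in> PX_V r s" using r3 s1 by (simp add: w_def)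
    have wf: "fst w < r" "length (snd w) = s" using wV inVc_f' by auto
    have lvl: "((y + r - (s - 1)) mod r + (s - 1)) mod r = y"
    proof -
      have "((y + r - (s - 1)) mod r + (s - 1)) mod r = (y + r - (s - 1) + (s - 1)) mod r"
        by (simp add: mod_simps)
      also have "y + r - (s - 1) + (s - 1) = y + r" using sr by simp
      finally show ?thesis using y by simp
    qed
    have wk1: "wk r s (s - 1) w (y, i # h')" if "length h' = s - 1" for h'
    proof -
      have "wk r s (length h') (fst w, snd w) ((fst w + length h') mod r, drop (length h') (snd w) @ h')"
        using wk_exists[OF r3 s1 wf, of h'] that by simp
      thus ?thesis using that lvl by (simp add: w_def)
    qed
    have zV: "(y, i # zs) \<in> PX_V r s" using y s1 by (simp add: zs_def)
    have A: "wk r s (s - 1) (F w) (F (y, i # h))" using wk_pres[of r s F, OF arcs] wk1[OF lh] by blast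
    have B: "wk r s (s - 1) (F w) (F (y, i # zs))" using wk_pres[of r s F, OF arcs] wk1[of zs] by (simp add: zs_def)
    have "snd (F (y, i # h)) ! 0 = snd (F w) ! (s - 1)"
      using wk_bits[OF r3 s1 A FV[OF wV], of 0] s1 by simp
    moreover have "snd (F (y, i # zs)) ! 0 = snd (F w) ! (s - 1)"
      using wk_bits[OF r3 s1 B FV[OF wV], of 0] s1 by simp
    moreover have "snd (F (y, i # h)) \<noteq> []" "snd (F (y, i # zs)) \<noteq> []"
      using FV[OF yh] FV[OF zV] s1 inVc_f' by auto
    ultimately show ?thesis unfolding \<beta>_def by (simp add: hd_conv_nth)
  qed
  have bits: "snd (F (x, e)) ! j = \<beta> ((x + j) mod r) (e ! j)" if v: "(x, e) \<in> PX_V r s" and j: "j < s" for x e j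
  proof -
    have x: "x < r" and e: "length e = s" using v by auto
    define vj where "vj = ((x + j) mod r, drop j e @ replicate j False)"
    have W: "wk r s j (x, e) vj"
      using wk_exists[OF r3 s1 x e, of "replicate j False"] j by (simp add: vj_def)
    have vj: "vj = ((x + j) mod r, e ! j # (drop (Suc j) e @ replicate j False))"
      using j e by (simp add: vj_def Cons_nth_drop_Suc)
    have vjV: "vj \<in> PX_V r s" using vj e j r3 by simp
    have W': "wk r s j (F (x, e)) (F vj)" using wk_pres[of r s F, OF arcs] W by blast
    have "snd (F vj) ! 0 = snd (F (x, e)) ! j" using wk_bits[OF r3 s1 W' FV[OF v], of 0] j by simp
    moreover have "snd (F vj) ! 0 = \<beta> ((x + j) mod r) (e ! j)"
    proof -
      have "snd (F vj) \<noteq> []" using FV[OF vjV] s1 inVc_f' by auto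
      hence "snd (F vj) ! 0 = hd (snd (F vj))" by (simp add: hd_conv_nth)
      thus ?thesis using wd vjV vj by simp
    qed
    ultimately show ?thesis by simp
  qed
  have bne: "\<beta> y False \<noteq> \<beta> y True" if y: "y < r" for y
  proof
    assume eq: "\<beta> y False = \<beta> y True"
    have u0: "(y, False # zs) \<in> PX_V r s" and u1: "(y, True # zs) \<in> PX_V r s" using y s1 by (auto simp: zs_def)
    have "snd (F (y, False # zs)) = snd (F (y, True # zs))"
    proof (rule nth_equalityI)
      show "length (snd (F (y, False # zs))) = length (snd (F (y, True # zs)))"
        using FV[OF u0] FV[OF u1] inVc_f' by simp
      fix j assume "j < length (snd (F (y, False # zs)))"
      hence j: "j < s" using FV[OF u0] inVc_f' by simp
      show "snd (F (y, False # zs)) ! j = snd (F (y, True # zs)) ! j"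
        using bits[OF u0 j] bits[OF u1 j] eq y by (cases j) auto
    qed
    moreover have "fst (F (y, False # zs)) = fst (F (y, True # zs))" using lev[OF u0] lev[OF u1] by simp
    ultimately have "F (y, False # zs) = F (y, True # zs)" by (simp add: prod_eq_iff)
    hence "(y, False # zs) = (y, True # zs)" using inj u0 u1 by (meson inj_onD)
    thus False by simp
  qed
  define c where "c z = \<beta> (z mod r) False" for z
  have bc: "\<beta> ((x + j) mod r) i = (i \<noteq> c ((x + j) mod r))" for x j i
  proof -
    have "(x + j) mod r < r" using r3 by simp
    thus ?thesis using bne[of "(x + j) mod r"] unfolding c_def by (cases i) auto
  qed
  have "\<forall>v\<in>PX_V r s. F v = T r b c v"
  proof
    fix v assume v: "v \<in> PX_V r s"
    obtain x e where ve: "v = (x, e)" by fastforce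
    have vv: "(x, e) \<in> PX_V r s" using v ve by simp
    have e: "length e = s" using vv by simp
    have "snd (F v) = xb r c x e"
    proof (rule nth_equalityI)
      show "length (snd (F v)) = length (xb r c x e)" using FV[OF v] inVc_f' e by simp
      fix j assume "j < length (snd (F v))"
      hence j: "j < s" using FV[OF v] inVc_f' by simp
      show "snd (F v) ! j = xb r c x e ! j" using bits[OF vv j] bc e j ve by simp
    qed
    moreover have "fst (F v) = (x + b) mod r" using lev[OF v] ve by simp
    ultimately show "F v = T r b c v" by (simp add: T_def ve prod_eq_iff)
  qed
  thus ?thesis using b by blast
qed

end


context
  fixes r s :: nat
  assumes r3: "3 \<le> r" and s1: "1 \<le> s"
begin

lemmas inVc_g[simp] = inV[OF r3 s1]
lemmas inVc_g' = inV'[OF r3 s1]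
lemmas arcI_g = arc_iff[OF r3 s1]

lemma finV: "finite (PX_V r s)"
proof -
  have "PX_V r s \<subseteq> {..<r} \<times> {e. length e = s}" by (auto simp: PX_V_def)
  thus ?thesis by (rule finite_subset) (simp add: finite_list_length)
qed

lemma finS: "finite (PX_S r s)"
proof -
  have "PX_S r s = (\<lambda>(x, h). PX_cyc r x h) ` ({..<r} \<times> {h. length h = s - 1})"
    by (auto simp: PX_S_def)
  thus ?thesis by (simp add: finite_list_length)
qed

lemma finSV: "finite (sPX_V r s)"
proof -
  have "sPX_V r s \<subseteq> PX_V r s \<times> PX_S r s"
    using SV_v[OF r3 s1] by (auto simp: SV_iff)
  thus ?thesis using finV finS finite_subset by blast
qed

lemma aut_gen:
  fixes G :: "pxv \<Rightarrow> pxv"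
  assumes GV: "\<And>v. v \<in> PX_V r s \<Longrightarrow> G v \<in> PX_V r s"
    and Ginj: "inj_on G (PX_V r s)"
    and Gadj: "\<And>u w. u \<in> PX_V r s \<Longrightarrow> w \<in> PX_V r s \<Longrightarrow> PX_adj r s u w \<longleftrightarrow> PX_adj r s (G u) (G w)"
    and GS: "\<And>C. C \<in> PX_S r s \<Longrightarrow> (\<lambda>e. G ` e) ` C \<in> PX_S r s"
  shows "is_aut (sPX_V r s) (sPX_adj r s) (\<lambda>p. (G (fst p), (\<lambda>e. G ` e) ` snd p))"
proof -
  let ?Gt = "\<lambda>C. (\<lambda>e. G ` e) ` C"
  let ?f = "\<lambda>p. (G (fst p), ?Gt (snd p))"
  have U: "\<Union>(?Gt C) = G ` \<Union>C" for C by (simp add: image_Union)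
  have Gtinj: "C = D" if C: "C \<in> PX_S r s" and D: "D \<in> PX_S r s" and e: "?Gt C = ?Gt D" for C D
  proof -
    have "G ` \<Union>C = G ` \<Union>D" using arg_cong[OF e, of Union] unfolding U .
    hence "\<Union>C = \<Union>D" by (rule inj_on_image_eq_iff[OF Ginj S_V[OF r3 s1 C] S_V[OF r3 s1 D], THEN iffD1])
    thus ?thesis using S_sub[OF r3 s1 C D] by simp
  qed
  have into: "?f ` sPX_V r s \<subseteq> sPX_V r s"
  proof
    fix q assume "q \<in> ?f ` sPX_V r s"
    then obtain p where p: "p \<in> sPX_V r s" and q: "q = ?f p" by blast
    have a: "snd p \<in> PX_S r s" "fst p \<in> \<Union>(snd p)" using p by (auto simp: SV_iff)
    have "?Gt (snd p) \<in> PX_S r s" using GS a by blast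
    moreover have "G (fst p) \<in> \<Union>(?Gt (snd p))" unfolding U using a by blast
    ultimately show "q \<in> sPX_V r s" unfolding SV_iff q by simp
  qed
  have inj: "inj_on ?f (sPX_V r s)"
  proof
    fix p q assume p: "p \<in> sPX_V r s" and q: "q \<in> sPX_V r s" and e: "?f p = ?f q"
    have "G (fst p) = G (fst q)" using e by simp
    hence "fst p = fst q" using SV_v[OF r3 s1 p] SV_v[OF r3 s1 q] Ginj by (meson inj_onD)
    moreover have "?Gt (snd p) = ?Gt (snd q)" using e by simp
    moreover have "snd p \<in> PX_S r s" "snd q \<in> PX_S r s" using p q by (auto simp: SV_iff)
    ultimately show "p = q" using Gtinj by (simp add: prod_eq_iff)
  qed
  have bij: "bij_betw ?f (sPX_V r s) (sPX_V r s)"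
    unfolding bij_betw_def using inj endo_inj_surj[OF finSV into inj] by blast
  have adj: "sPX_adj r s p q \<longleftrightarrow> sPX_adj r s (?f p) (?f q)" if p: "p \<in> sPX_V r s" and q: "q \<in> sPX_V r s" for p q
  proof -
    have pv: "fst p \<in> PX_V r s" and qv: "fst q \<in> PX_V r s" using SV_v[OF r3 s1] p q by auto
    have pS: "snd p \<in> PX_S r s" and qS: "snd q \<in> PX_S r s" using p q by (auto simp: SV_iff)
    have 1: "(?Gt (snd p) = ?Gt (snd q)) \<longleftrightarrow> snd p = snd q" using Gtinj[OF pS qS] by blast
    have 2: "(G (fst p) = G (fst q)) \<longleftrightarrow> fst p = fst q" using Ginj pv qv by (metis inj_onD)
    show ?thesis unfolding adjS_iff fst_conv snd_conv using 1 2 Gadj[OF pv qv] by blast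
  qed
  show ?thesis unfolding is_aut_def using bij adj by blast
qed

lemma T_cyc:
  assumes x: "x < r" and h: "length h = s - 1"
  shows "(\<lambda>e. T r b c ` e) ` PX_cyc r x h = PX_cyc r ((x + b) mod r) (xb r c (Suc x) h)"
proof -
  define x' where "x' = (x + b) mod r"
  define h' where "h' = xb r c (Suc x) h"
  define k where "k = (Suc x + length h) mod r"
  have Ta: "T r b c (ca r x h) = (if c (x mod r) then cc r x' h' else ca r x' h')"
    by (simp add: T_def ca_def cc_def x'_def h'_def)
  have Tc: "T r b c (cc r x h) = (if c (x mod r) then ca r x' h' else cc r x' h')"
    by (simp add: T_def ca_def cc_def x'_def h'_def)
  have lv: "((x + 1) mod r + b) mod r = (x' + 1) mod r" by (simp add: x'_def mod_simps add.commute add.left_commute)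
  have xbb: "xb r c ((x + 1) mod r) (h @ [d]) = h' @ [d \<noteq> c k]" for d
    by (simp add: xb_mod xb_snoc h'_def k_def mod_simps)
  have Tb: "T r b c (cb r x h) = (if c k then cd r x' h' else cb r x' h')"
    using lv xbb[of False] by (simp add: T_def cb_def cd_def)
  have Td: "T r b c (cd r x h) = (if c k then cb r x' h' else cd r x' h')"
    using lv xbb[of True] by (simp add: T_def cb_def cd_def)
  show ?thesis unfolding cyc_eq image_insert image_empty Ta Tb Tc Td x'_def[symmetric] h'_def[symmetric]
    by (cases "c (x mod r)"; cases "c k") (auto simp: insert_commute)
qed

lemma R_cyc:
  assumes x: "x < r" and h: "length h = s - 1"
  shows "\<exists>x' h'. x' < r \<and> length h' = s - 1 \<and> (\<lambda>e. R r b c ` e) ` PX_cyc r x h = PX_cyc r x' h'"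
proof -
  define x' where "x' = (r - ((x + 1) mod r + s - 1) mod r + b) mod r"
  define h' where "h' = rev (xb r c (Suc x) h)"
  define k where "k = (Suc x + length h) mod r"
  have ls: "length (False # h) = s" "length (True # h) = s" "length (h @ [False]) = s" "length (h @ [True]) = s"
    using h s1 by auto
  have lvA: "(r - (x + s - 1) mod r + b) mod r = (x' + 1) mod r"
  proof -
    have "((r - (x + s - 1) mod r + b) mod r = (x' + 1) mod r) \<longleftrightarrow>
      int r dvd ((int b - int (x + s - 1)) - (int b - int ((x + 1) mod r + s - 1) + 1))"
      unfolding x'_def by (rule lev_eq_dvd[OF r3 s1 repR[OF r3 s1] repSucc[OF r3 s1 repR[OF r3 s1]]])
    moreover have "(int b - int (x + s - 1)) - (int b - int ((x + 1) mod r + s - 1) + 1) = int ((x + 1) mod r) - (int x + 1)"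
      using s1 by (simp add: of_nat_diff)
    moreover have "int r dvd (int ((x + 1) mod r) - (int x + 1))"
      by (simp add: zmod_int mod_eq_dvd_iff[symmetric] mod_simps add.commute)
    ultimately show ?thesis by metis
  qed
  have Ra: "R r b c (ca r x h) = (if c (x mod r) then cd r x' h' else cb r x' h')"
    using lvA ls by (simp add: R_def ca_def cb_def cd_def h'_def)
  have Rc: "R r b c (cc r x h) = (if c (x mod r) then cb r x' h' else cd r x' h')"
    using lvA ls by (simp add: R_def cc_def cb_def cd_def h'_def)
  have xbb: "rev (xb r c ((x + 1) mod r) (h @ [d])) = (d \<noteq> c k) # h'" for d
    by (simp add: xb_mod xb_snoc h'_def k_def mod_simps)
  have Rb: "R r b c (cb r x h) = (if c k then cc r x' h' else ca r x' h')"
    using xbb[of False] ls by (simp add: R_def cb_def ca_def cc_def x'_def)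
  have Rd: "R r b c (cd r x h) = (if c k then ca r x' h' else cc r x' h')"
    using xbb[of True] ls by (simp add: R_def cd_def ca_def cc_def x'_def)
  have "(\<lambda>e. R r b c ` e) ` PX_cyc r x h = PX_cyc r x' h'"
    unfolding cyc_eq image_insert image_empty Ra Rb Rc Rd
    by (cases "c (x mod r)"; cases "c k") (auto simp: insert_commute)
  moreover have "x' < r" using r3 by (simp add: x'_def)
  moreover have "length h' = s - 1" using h by (simp add: h'_def)
  ultimately show ?thesis by blast
qed

end


lemma H_iff: "g \<in> H_grp r \<longleftrightarrow> (\<exists>neg b c. b < r \<and> g = H_map r neg b c)"
  unfolding H_grp_def by blast

lemma act_sV_eq: "act_sV r g = (\<lambda>p. (act_V r g (fst p), (\<lambda>e. act_V r g ` e) ` snd p))"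
  by (rule ext) (simp add: act_sV_def)

context
  fixes r s :: nat
  assumes r3: "3 \<le> r" and s1: "1 \<le> s"
begin

lemmas inVc_h[simp] = inV[OF r3 s1]
lemmas inVc_h' = inV'[OF r3 s1]

lemma actT: "v \<in> PX_V r s \<Longrightarrow> act_V r (H_map r False b c) v = T r b c v"
  using act_T[of r "snd v" b c "fst v"] r3 s1 by (cases v) simp

lemma actR: "v \<in> PX_V r s \<Longrightarrow> act_V r (H_map r True b c) v = R r b c v"
  using act_R[of r "snd v" b c "fst v"] r3 s1 by (cases v) simp

lemma transfer:
  assumes eq: "\<And>v. v \<in> PX_V r s \<Longrightarrow> G v = K v"
    and KV: "\<And>v. v \<in> PX_V r s \<Longrightarrow> K v \<in> PX_V r s"
    and Kinj: "inj_on K (PX_V r s)"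
    and Kadj: "\<And>u w. u \<in> PX_V r s \<Longrightarrow> w \<in> PX_V r s \<Longrightarrow> PX_adj r s u w \<longleftrightarrow> PX_adj r s (K u) (K w)"
    and KS: "\<And>C. C \<in> PX_S r s \<Longrightarrow> (\<lambda>e. K ` e) ` C \<in> PX_S r s"
  shows "(\<forall>v\<in>PX_V r s. G v \<in> PX_V r s) \<and> inj_on G (PX_V r s) \<and>
    (\<forall>u\<in>PX_V r s. \<forall>w\<in>PX_V r s. PX_adj r s u w \<longleftrightarrow> PX_adj r s (G u) (G w)) \<and>
    (\<forall>C\<in>PX_S r s. (\<lambda>e. G ` e) ` C \<in> PX_S r s \<and> (\<lambda>e. G ` e) ` C = (\<lambda>e. K ` e) ` C)"
proof (intro conjI ballI)
  show "inj_on G (PX_V r s)" using Kinj eq inj_on_cong by blast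
next
  fix C assume C: "C \<in> PX_S r s"
  have "(\<lambda>e. G ` e) ` C = (\<lambda>e. K ` e) ` C"
  proof (rule image_cong[OF refl])
    fix e assume "e \<in> C"
    hence "e \<subseteq> PX_V r s" using S_V[OF r3 s1 C] by blast
    thus "G ` e = K ` e" using eq by (auto intro!: image_cong)
  qed
  thus "(\<lambda>e. G ` e) ` C \<in> PX_S r s" "(\<lambda>e. G ` e) ` C = (\<lambda>e. K ` e) ` C" using KS[OF C] by auto
qed (use eq KV Kadj in auto)

lemma T_S: "C \<in> PX_S r s \<Longrightarrow> (\<lambda>e. T r b c ` e) ` C \<in> PX_S r s"
proof -
  assume "C \<in> PX_S r s"
  then obtain x h where x: "x < r" and h: "length h = s - 1" and C: "C = PX_cyc r x h"
    unfolding S_iff[OF r3 s1] by blast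
  have "(\<lambda>e. T r b c ` e) ` C = PX_cyc r ((x + b) mod r) (xb r c (Suc x) h)"
    using T_cyc[OF r3 s1 x h] C by simp
  moreover have "(x + b) mod r < r" using r3 by simp
  moreover have "length (xb r c (Suc x) h) = s - 1" using h by simp
  ultimately show ?thesis unfolding S_iff[OF r3 s1] by blast
qed

lemma R_S: "C \<in> PX_S r s \<Longrightarrow> (\<lambda>e. R r b c ` e) ` C \<in> PX_S r s"
proof -
  assume "C \<in> PX_S r s"
  then obtain x h where x: "x < r" and h: "length h = s - 1" and C: "C = PX_cyc r x h"
    unfolding S_iff[OF r3 s1] by blast
  show ?thesis using R_cyc[OF r3 s1 x h, of b c] C unfolding S_iff[OF r3 s1] by metis
qed

lemma H_props:
  assumes g: "g \<in> H_grp r"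
  shows "(\<forall>v\<in>PX_V r s. act_V r g v \<in> PX_V r s) \<and> inj_on (act_V r g) (PX_V r s) \<and>
    (\<forall>u\<in>PX_V r s. \<forall>w\<in>PX_V r s. PX_adj r s u w \<longleftrightarrow> PX_adj r s (act_V r g u) (act_V r g w)) \<and>
    (\<forall>C\<in>PX_S r s. (\<lambda>e. act_V r g ` e) ` C \<in> PX_S r s \<and>
       (\<lambda>e. act_V r g ` e) ` C = (\<lambda>e. act_V r g ` e) ` C)"
proof -
  obtain neg b c where b: "b < r" and ge: "g = H_map r neg b c" using g H_iff by blast
  show ?thesis
  proof (cases neg)
    case False
    have "(\<forall>v\<in>PX_V r s. act_V r g v \<in> PX_V r s) \<and> inj_on (act_V r g) (PX_V r s) \<and>
      (\<forall>u\<in>PX_V r s. \<forall>w\<in>PX_V r s. PX_adj r s u w \<longleftrightarrow> PX_adj r s (act_V r g u) (act_V r g w)) \<and>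
      (\<forall>C\<in>PX_S r s. (\<lambda>e. act_V r g ` e) ` C \<in> PX_S r s \<and> (\<lambda>e. act_V r g ` e) ` C = (\<lambda>e. T r b c ` e) ` C)"
      by (rule transfer[of "act_V r g" "T r b c"])
         (use actT ge False T_V[OF r3 s1] T_inj[OF r3 s1] T_adj[OF r3 s1] T_S in auto)
    thus ?thesis by blast
  next
    case True
    have "(\<forall>v\<in>PX_V r s. act_V r g v \<in> PX_V r s) \<and> inj_on (act_V r g) (PX_V r s) \<and>
      (\<forall>u\<in>PX_V r s. \<forall>w\<in>PX_V r s. PX_adj r s u w \<longleftrightarrow> PX_adj r s (act_V r g u) (act_V r g w)) \<and>
      (\<forall>C\<in>PX_S r s. (\<lambda>e. act_V r g ` e) ` C \<in> PX_S r s \<and> (\<lambda>e. act_V r g ` e) ` C = (\<lambda>e. R r b c ` e) ` C)"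
      by (rule transfer[of "act_V r g" "R r b c"])
         (use actR ge True R_V[OF r3 s1] R_inj[OF r3 s1] R_adj[OF r3 s1] R_S in auto)
    thus ?thesis by blast
  qed
qed

lemma conj1: "g \<in> H_grp r \<Longrightarrow> is_aut (sPX_V r s) (sPX_adj r s) (act_sV r g)"
  unfolding act_sV_eq
  apply (rule aut_gen[OF r3 s1])
  using H_props[of g] by blast+

end


lemma rep_dvd: "int a = A mod int r \<Longrightarrow> int r dvd (int a - A)"
proof -
  assume "int a = A mod int r"
  hence "int a mod int r = A mod int r" by simp
  thus ?thesis by (simp add: mod_eq_dvd_iff)
qed

context
  fixes r s :: nat
  assumes r3: "3 \<le> r" and s1: "1 \<le> s"
begin

lemmas inVc_i[simp] = inV[OF r3 s1]
lemmas inVc_i' = inV'[OF r3 s1]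

lemma R0_inv: "v \<in> PX_V r s \<Longrightarrow> R r 0 (\<lambda>_. False) (R r 0 (\<lambda>_. False) v) = v"
proof -
  assume v: "v \<in> PX_V r s"
  obtain x e where ve: "v = (x, e)" by fastforce
  have x: "x < r" and e: "length e = s" using v ve by auto
  define x' where "x' = (r - (x + s - 1) mod r + 0) mod r"
  have x'r: "x' < r" using r3 by (simp add: x'_def)
  have d1: "int r dvd (int x' - (int 0 - int (x + s - 1)))"
    by (rule rep_dvd) (use repR[OF r3 s1, of "x + s - 1" 0] in \<open>simp add: x'_def\<close>)
  have L: "((r - (x' + s - 1) mod r + 0) mod r = x) \<longleftrightarrow> int r dvd ((int 0 - int (x' + s - 1)) - int x)"
    by (rule lev_eq_dvd[OF r3 s1 repR[OF r3 s1] repId[OF r3 s1 x]])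
  have eq: "(int 0 - int (x' + s - 1)) - int x = - ((int x' - (int 0 - int (x + s - 1))))"
    using s1 by (simp add: of_nat_diff)
  have "int r dvd ((int 0 - int (x' + s - 1)) - int x)" unfolding eq using d1 by (simp only: dvd_minus_iff)
  hence "(r - (x' + s - 1) mod r + 0) mod r = x" using L by blast
  thus ?thesis using e by (simp add: R_def ve x'_def)
qed

lemma RT: "v \<in> PX_V r s \<Longrightarrow> b < r \<Longrightarrow> R r 0 (\<lambda>_. False) (T r b c v) = R r ((r - b) mod r) c v"
proof -
  assume v: "v \<in> PX_V r s" and b: "b < r"
  obtain x e where ve: "v = (x, e)" by fastforce
  have x: "x < r" and e: "length e = s" using v ve by auto
  have "((r - ((x + b) mod r + s - 1) mod r + 0) mod r = (r - (x + s - 1) mod r + (r - b) mod r) mod r)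
     \<longleftrightarrow> int r dvd ((int 0 - int ((x + b) mod r + s - 1)) - (int ((r - b) mod r) - int (x + s - 1)))"
    by (rule lev_eq_dvd[OF r3 s1 repR[OF r3 s1] repR[OF r3 s1]])
  moreover have "int r dvd (int ((x + b) mod r) - (int x + int b))"
    by (rule rep_dvd) (simp add: zmod_int)
  moreover have "int r dvd (int ((r - b) mod r) - (int r - int b))"
    by (rule rep_dvd) (use b in \<open>simp add: zmod_int of_nat_diff\<close>)
  moreover have "(int 0 - int ((x + b) mod r + s - 1)) - (int ((r - b) mod r) - int (x + s - 1))
     = - (int ((x + b) mod r) - (int x + int b)) - (int ((r - b) mod r) - (int r - int b)) - int r"
    using s1 by (simp add: of_nat_diff algebra_simps)
  ultimately have "(r - ((x + b) mod r + s - 1) mod r + 0) mod r = (r - (x + s - 1) mod r + (r - b) mod r) mod r"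
    by (metis dvd_diff dvd_minus_iff dvd_refl)
  thus ?thesis using e by (simp add: R_def T_def ve)
qed

end


context
  fixes r s :: nat and f :: "pxv \<times> pxv set set \<Rightarrow> pxv \<times> pxv set set"
  assumes r3: "3 \<le> r" and s1: "1 \<le> s" and aut: "is_aut (sPX_V r s) (sPX_adj r s) f"
begin

lemmas inVc_j[simp] = inV[OF r3 s1]
lemmas inVc_j' = inV'[OF r3 s1]
lemmas arcI_j = arc_iff[OF r3 s1]

lemma fbij: "bij_betw f (sPX_V r s) (sPX_V r s)" using aut unfolding is_aut_def by (rule conjunct1)
lemma fV: "p \<in> sPX_V r s \<Longrightarrow> f p \<in> sPX_V r s" by (rule bij_betw_apply[OF fbij])
lemma finj: "inj_on f (sPX_V r s)" by (rule bij_betw_imp_inj_on[OF fbij])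
lemma fsurj: "f ` sPX_V r s = sPX_V r s" by (rule bij_betw_imp_surj_on[OF fbij])
lemma fadj0: "\<forall>p\<in>sPX_V r s. \<forall>q\<in>sPX_V r s. sPX_adj r s p q \<longleftrightarrow> sPX_adj r s (f p) (f q)"
  using aut unfolding is_aut_def by (rule conjunct2)
lemma fadj: "p \<in> sPX_V r s \<Longrightarrow> q \<in> sPX_V r s \<Longrightarrow> sPX_adj r s p q \<longleftrightarrow> sPX_adj r s (f p) (f q)"
  using fadj0 by blast

lemma fsq: "p \<in> sPX_V r s \<Longrightarrow> q \<in> sPX_V r s \<Longrightarrow> sq r s p q \<Longrightarrow> sq r s (f p) (f q)"
proof -
  assume p: "p \<in> sPX_V r s" and q: "q \<in> sPX_V r s" and "sq r s p q"
  then obtain u w where u: "u \<in> sPX_V r s" and w: "w \<in> sPX_V r s" and d: "distinct [p,q,u,w]"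
    and A: "sPX_adj r s q u" "sPX_adj r s u w" "sPX_adj r s w p" unfolding sq_def by blast
  have "distinct [f p, f q, f u, f w]" using d p q u w finj by (auto dest: inj_onD)
  moreover have "sPX_adj r s (f q) (f u)" "sPX_adj r s (f u) (f w)" "sPX_adj r s (f w) (f p)"
    using A fadj p q u w by blast+
  ultimately show ?thesis unfolding sq_def using fV u w by blast
qed

lemma fsq_rev: "p \<in> sPX_V r s \<Longrightarrow> q \<in> sPX_V r s \<Longrightarrow> sq r s (f p) (f q) \<Longrightarrow> sq r s p q"
proof -
  assume p: "p \<in> sPX_V r s" and q: "q \<in> sPX_V r s" and "sq r s (f p) (f q)"
  then obtain u' w' where u': "u' \<in> sPX_V r s" and w': "w' \<in> sPX_V r s" and d: "distinct [f p,f q,u',w']"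
    and A: "sPX_adj r s (f q) u'" "sPX_adj r s u' w'" "sPX_adj r s w' (f p)" unfolding sq_def by blast
  obtain u where u: "u \<in> sPX_V r s" "u' = f u" using u' fsurj by blast
  obtain w where w: "w \<in> sPX_V r s" "w' = f w" using w' fsurj by blast
  have "distinct [p, q, u, w]" using d u w by auto
  moreover have "sPX_adj r s q u" "sPX_adj r s u w" "sPX_adj r s w p"
    using A fadj p q u w by blast+
  ultimately show ?thesis unfolding sq_def using u w by blast
qed

lemma f_snd: "p \<in> sPX_V r s \<Longrightarrow> q \<in> sPX_V r s \<Longrightarrow> sPX_adj r s p q \<Longrightarrow>
   (snd (f p) = snd (f q)) \<longleftrightarrow> snd p = snd q"
proof -
  assume p: "p \<in> sPX_V r s" and q: "q \<in> sPX_V r s" and pq: "sPX_adj r s p q"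
  have fpq: "sPX_adj r s (f p) (f q)" using fadj p q pq by blast
  have "(snd (f p) = snd (f q)) \<longleftrightarrow> sq r s (f p) (f q)" using sq_iff[OF r3 s1 fV[OF p] fV[OF q] fpq] by simp
  also have "\<dots> \<longleftrightarrow> sq r s p q" using fsq fsq_rev p q by blast
  also have "\<dots> \<longleftrightarrow> snd p = snd q" using sq_iff[OF r3 s1 p q pq] .
  finally show ?thesis .
qed

definition F :: "pxv \<Rightarrow> pxv" where "F v = fst (f (v, Cp r v))"

lemma pCp: "v \<in> PX_V r s \<Longrightarrow> (v, Cp r v) \<in> sPX_V r s" using SV_pair[OF r3 s1] by blast
lemma pCm: "v \<in> PX_V r s \<Longrightarrow> (v, Cm r v) \<in> sPX_V r s" using SV_pair[OF r3 s1] by blast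

lemma f_fst: "v \<in> PX_V r s \<Longrightarrow> (v, C) \<in> sPX_V r s \<Longrightarrow> fst (f (v, C)) = F v"
proof -
  assume v: "v \<in> PX_V r s" and vC: "(v, C) \<in> sPX_V r s"
  have "C = Cp r v \<or> C = Cm r v" using SV_pair[OF r3 s1 v] vC by blast
  thus ?thesis
  proof
    assume "C = Cp r v" thus ?thesis by (simp add: F_def)
  next
    assume C: "C = Cm r v"
    have ne: "Cp r v \<noteq> Cm r v" using Cp_ne_Cm[OF r3 s1 v] .
    have ad: "sPX_adj r s (v, Cp r v) (v, Cm r v)" using ne by (simp add: adjS_iff)
    have "snd (f (v, Cp r v)) \<noteq> snd (f (v, Cm r v))" using f_snd[OF pCp[OF v] pCm[OF v] ad] ne by simp
    moreover have "sPX_adj r s (f (v, Cp r v)) (f (v, Cm r v))" using fadj pCp[OF v] pCm[OF v] ad by blast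
    ultimately have "fst (f (v, Cp r v)) = fst (f (v, Cm r v))" by (simp add: adjS_iff)
    thus ?thesis using C by (simp add: F_def)
  qed
qed

lemma F_V: "v \<in> PX_V r s \<Longrightarrow> F v \<in> PX_V r s"
  unfolding F_def using fV[OF pCp] SV_v[OF r3 s1] by blast

lemma f_form: "v \<in> PX_V r s \<Longrightarrow> (v, C) \<in> sPX_V r s \<Longrightarrow>
   f (v, C) = (F v, snd (f (v, C))) \<and> (snd (f (v, C)) = Cp r (F v) \<or> snd (f (v, C)) = Cm r (F v))"
proof -
  assume v: "v \<in> PX_V r s" and vC: "(v, C) \<in> sPX_V r s"
  have e: "f (v, C) = (F v, snd (f (v, C)))" using f_fst[OF v vC] by (simp add: prod_eq_iff)
  have "(F v, snd (f (v, C))) \<in> sPX_V r s" using fV[OF vC] e by simp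
  thus ?thesis using e SV_pair[OF r3 s1 F_V[OF v]] by blast
qed

lemma snd_ne: "v \<in> PX_V r s \<Longrightarrow> snd (f (v, Cp r v)) \<noteq> snd (f (v, Cm r v))"
proof -
  assume v: "v \<in> PX_V r s"
  have ne: "Cp r v \<noteq> Cm r v" using Cp_ne_Cm[OF r3 s1 v] .
  have ad: "sPX_adj r s (v, Cp r v) (v, Cm r v)" using ne by (simp add: adjS_iff)
  show ?thesis using f_snd[OF pCp[OF v] pCm[OF v] ad] ne by simp
qed

lemma F_inj: "inj_on F (PX_V r s)"
proof
  fix u v assume u: "u \<in> PX_V r s" and v: "v \<in> PX_V r s" and e: "F u = F v"
  show "u = v"
  proof (rule ccontr)
    assume n: "u \<noteq> v"
    define w where "w = F v"
    have A: "f (u, Cp r u) \<in> {(w, Cp r w), (w, Cm r w)}" "f (u, Cm r u) \<in> {(w, Cp r w), (w, Cm r w)}"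
      "f (v, Cp r v) \<in> {(w, Cp r w), (w, Cm r w)}" "f (v, Cm r v) \<in> {(w, Cp r w), (w, Cm r w)}"
      using f_form[OF u pCp[OF u]] f_form[OF u pCm[OF u]] f_form[OF v pCp[OF v]] f_form[OF v pCm[OF v]] e w_def
      by auto
    have "distinct [(u, Cp r u), (u, Cm r u), (v, Cp r v), (v, Cm r v)]"
      using n Cp_ne_Cm[OF r3 s1 u] Cp_ne_Cm[OF r3 s1 v] by auto
    hence "distinct [f (u, Cp r u), f (u, Cm r u), f (v, Cp r v), f (v, Cm r v)]"
      using finj pCp[OF u] pCm[OF u] pCp[OF v] pCm[OF v] by (auto dest: inj_onD)
    thus False using A by auto
  qed
qed

definition sig :: "pxv \<Rightarrow> bool" where "sig v \<longleftrightarrow> snd (f (v, Cp r v)) = Cp r (F v)"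

lemma cyc_edge:
  assumes C: "C \<in> PX_S r s" and u: "u \<in> \<Union>C" and w: "w \<in> \<Union>C" and uw: "PX_adj r s u w"
  shows "snd (f (u, C)) = snd (f (w, C)) \<and> PX_adj r s (F u) (F w)"
proof -
  have uV: "u \<in> PX_V r s" and wV: "w \<in> PX_V r s" using S_V[OF r3 s1 C] u w by auto
  have p: "(u, C) \<in> sPX_V r s" and q: "(w, C) \<in> sPX_V r s" using C u w by (auto simp: SV_iff)
  have ad: "sPX_adj r s (u, C) (w, C)" using uw by (simp add: adjS_iff)
  have 1: "snd (f (u, C)) = snd (f (w, C))" using f_snd[OF p q ad] by simp
  have "sPX_adj r s (f (u, C)) (f (w, C))" using fadj p q ad by blast
  hence "PX_adj r s (fst (f (u, C))) (fst (f (w, C)))" using 1 by (simp add: adjS_iff)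
  thus ?thesis using 1 f_fst[OF uV p] f_fst[OF wV q] by simp
qed

lemma cyc_all:
  assumes C: "C \<in> PX_S r s" and u: "u \<in> \<Union>C" and w: "w \<in> \<Union>C"
  shows "snd (f (u, C)) = snd (f (w, C))"
proof -
  obtain x h where x: "x < r" and h: "length h = s - 1" and Ce: "C = PX_cyc r x h"
    using C unfolding S_iff[OF r3 s1] by blast
  note A = cyc_adj[OF r3 s1 x h]
  have V: "ca r x h \<in> \<Union>C" "cb r x h \<in> \<Union>C" "cc r x h \<in> \<Union>C" "cd r x h \<in> \<Union>C"
    unfolding Ce cyc_verts by auto
  have e1: "snd (f (ca r x h, C)) = snd (f (cb r x h, C))"
    using cyc_edge[OF C V(1) V(2)] A by (simp add: PX_adj_def)
  have e2: "snd (f (cc r x h, C)) = snd (f (cb r x h, C))"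
    using cyc_edge[OF C V(3) V(2)] A by (simp add: PX_adj_def)
  have e3: "snd (f (cc r x h, C)) = snd (f (cd r x h, C))"
    using cyc_edge[OF C V(3) V(4)] A by (simp add: PX_adj_def)
  have "u \<in> {ca r x h, cb r x h, cc r x h, cd r x h}" "w \<in> {ca r x h, cb r x h, cc r x h, cd r x h}"
    using u w unfolding Ce cyc_verts by auto
  thus ?thesis using e1 e2 e3 by auto
qed

lemma arc_step:
  assumes a: "PX_arc r s u w"
  shows "(sig u \<longleftrightarrow> sig w) \<and> (sig u \<longrightarrow> PX_arc r s (F u) (F w)) \<and> (\<not> sig u \<longrightarrow> PX_arc r s (F w) (F u))"
proof -
  have uV: "u \<in> PX_V r s" and wV: "w \<in> PX_V r s" using a arcI_j by auto
  define C where "C = Cp r u"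
  have Cm: "C = Cm r w" using arc_C[OF r3 s1 a] C_def by simp
  have CS: "C \<in> PX_S r s" using Cp_S[OF r3 s1 uV] C_def by simp
  have uC: "u \<in> \<Union>C" using in_Cp[OF r3 s1 uV] C_def by simp
  have wC: "w \<in> \<Union>C" using in_Cm[OF r3 s1 wV] Cm by simp
  have ad: "PX_adj r s u w" using a by (simp add: PX_adj_def)
  define D where "D = snd (f (u, C))"
  have E: "snd (f (w, C)) = D" "PX_adj r s (F u) (F w)" using cyc_edge[OF CS uC wC ad] D_def by auto
  have FwD: "F w \<in> \<Union>D"
  proof -
    have "(w, C) \<in> sPX_V r s" using CS wC by (simp add: SV_iff)
    hence "f (w, C) \<in> sPX_V r s" by (rule fV)
    thus ?thesis using f_fst[OF wV] CS wC E by (auto simp: SV_iff)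
  qed
  have FuV: "F u \<in> PX_V r s" and FwV: "F w \<in> PX_V r s" using F_V uV wV by auto
  have wform: "snd (f (w, Cp r w)) = Cp r (F w) \<or> snd (f (w, Cp r w)) = Cm r (F w)"
    using f_form[OF wV pCp[OF wV]] by blast
  have wne: "snd (f (w, Cp r w)) \<noteq> D" using snd_ne[OF wV] E Cm by simp
  show ?thesis
  proof (cases "sig u")
    case True
    hence D1: "D = Cp r (F u)" using D_def C_def sig_def by simp
    have ar: "PX_arc r s (F u) (F w)" using L1[OF r3 s1 FuV] FwD D1 E by blast
    have "D = Cm r (F w)" using arc_C[OF r3 s1 ar] D1 by simp
    hence "sig w" using wform wne sig_def by auto
    thus ?thesis using True ar by blast
  next
    case False
    have "snd (f (u, Cp r u)) = Cp r (F u) \<or> snd (f (u, Cp r u)) = Cm r (F u)"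
      using f_form[OF uV pCp[OF uV]] by blast
    hence D1: "D = Cm r (F u)" using False D_def C_def sig_def by auto
    have ar: "PX_arc r s (F w) (F u)" using L2[OF r3 s1 FuV] FwD D1 E by blast
    have "Cp r (F w) = D" using arc_C[OF r3 s1 ar] D1 by simp
    hence "\<not> sig w" using wne sig_def by auto
    thus ?thesis using False ar by blast
  qed
qed

lemma sig_const: "v \<in> PX_V r s \<Longrightarrow> sig v \<longleftrightarrow> sig (0, replicate s False)"
  using conn[OF r3 s1 _, of sig v] arc_step by blast

lemma final_match:
  assumes G: "\<And>v. v \<in> PX_V r s \<Longrightarrow> F v = act_V r g v" and g: "g \<in> H_grp r"
  shows "\<forall>p\<in>sPX_V r s. f p = act_sV r g p"
proof
  fix p assume p: "p \<in> sPX_V r s"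
  obtain v C where pe: "p = (v, C)" by fastforce
  have v: "v \<in> PX_V r s" using SV_v[OF r3 s1 p] pe by simp
  have CS: "C \<in> PX_S r s" and vC: "v \<in> \<Union>C" using p pe by (auto simp: SV_iff)
  define D where "D = snd (f (v, C))"
  have DS: "D \<in> PX_S r s" using fV[OF p] pe D_def by (simp add: SV_iff)
  have HP: "(\<lambda>e. act_V r g ` e) ` C \<in> PX_S r s" using H_props[OF r3 s1 g] CS by blast
  have sub: "\<Union>((\<lambda>e. act_V r g ` e) ` C) \<subseteq> \<Union>D"
  proof
    fix y assume "y \<in> \<Union>((\<lambda>e. act_V r g ` e) ` C)"
    then obtain u where uC: "u \<in> \<Union>C" and y: "y = act_V r g u" by blast
    have uV: "u \<in> PX_V r s" using S_V[OF r3 s1 CS] uC by blast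
    have uS: "(u, C) \<in> sPX_V r s" using CS uC by (simp add: SV_iff)
    have "snd (f (u, C)) = D" using cyc_all[OF CS uC vC] D_def by simp
    moreover have "fst (f (u, C)) = act_V r g u" using f_fst[OF uV uS] G[OF uV] by simp
    moreover have "fst (f (u, C)) \<in> \<Union>(snd (f (u, C)))" using fV[OF uS] by (simp add: SV_iff)
    ultimately show "y \<in> \<Union>D" using y by simp
  qed
  have "(\<lambda>e. act_V r g ` e) ` C = D" using S_sub[OF r3 s1 HP DS sub] .
  moreover have "fst (f (v, C)) = act_V r g v" using f_fst[OF v] p pe G[OF v] by simp
  ultimately have "f (v, C) = act_sV r g (v, C)" using D_def by (simp add: act_sV_def prod_eq_iff)
  thus "f p = act_sV r g p" using pe by simp
qed

end

context
  fixes r s :: nat and f :: "pxv \<times> pxv set set \<Rightarrow> pxv \<times> pxv set set"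
  assumes r3: "3 \<le> r" and s1: "1 \<le> s" and sr: "s \<le> r - 1" and aut: "is_aut (sPX_V r s) (sPX_adj r s) f"
begin

lemma conj2: "\<exists>g\<in>H_grp r. \<forall>p\<in>sPX_V r s. f p = act_sV r g p"
proof -
  let ?F = "F r f"
  define v0 where "v0 = (0::nat, replicate s False)"
  have FV: "\<And>v. v \<in> PX_V r s \<Longrightarrow> ?F v \<in> PX_V r s" using F_V[OF r3 s1 aut] by blast
  have Finj: "inj_on ?F (PX_V r s)" using F_inj[OF r3 s1 aut] .
  show ?thesis
  proof (cases "sig r f v0")
    case True
    have arcs: "PX_arc r s (?F u) (?F w)" if a: "PX_arc r s u w" for u w
    proof -
      have "u \<in> PX_V r s" using a arc_iff[OF r3 s1] by auto
      hence "sig r f u" using sig_const[OF r3 s1 aut] True v0_def by blast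
      thus ?thesis using arc_step[OF r3 s1 aut a] by blast
    qed
    obtain b c where b: "b < r" and Fe: "\<forall>v\<in>PX_V r s. ?F v = T r b c v"
      using digraph_aut[OF r3 s1 sr FV Finj arcs] by blast
    have g: "H_map r False b c \<in> H_grp r" using b H_iff by blast
    have "?F v = act_V r (H_map r False b c) v" if "v \<in> PX_V r s" for v
      using Fe that actT[OF r3 s1 that] by simp
    thus ?thesis using final_match[OF r3 s1 aut _ g] g by blast
  next
    case False
    let ?R0 = "R r 0 (\<lambda>_. False)"
    let ?F' = "\<lambda>v. ?R0 (?F v)"
    have F'V: "\<And>v. v \<in> PX_V r s \<Longrightarrow> ?F' v \<in> PX_V r s" using FV R_V[OF r3 s1] by blast
    have F'inj: "inj_on ?F' (PX_V r s)"
    proof (rule comp_inj_on[OF Finj, unfolded comp_def])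
      show "inj_on ?R0 (?F ` PX_V r s)"
        using R_inj[OF r3 s1] FV by (meson image_subsetI inj_on_subset)
    qed
    have arcs: "PX_arc r s (?F' u) (?F' w)" if a: "PX_arc r s u w" for u w
    proof -
      have uV: "u \<in> PX_V r s" and wV: "w \<in> PX_V r s" using a arc_iff[OF r3 s1] by auto
      hence "\<not> sig r f u" using sig_const[OF r3 s1 aut] False v0_def by blast
      hence "PX_arc r s (?F w) (?F u)" using arc_step[OF r3 s1 aut a] by blast
      thus ?thesis using R_arc[OF r3 s1 FV[OF wV] FV[OF uV]] by blast
    qed
    obtain b c where b: "b < r" and Fe: "\<forall>v\<in>PX_V r s. ?F' v = T r b c v"
      using digraph_aut[OF r3 s1 sr F'V F'inj arcs] by blast
    have "(r - b) mod r < r" using r3 by simp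
    hence g: "H_map r True ((r - b) mod r) c \<in> H_grp r" unfolding H_iff by blast
    have "?F v = act_V r (H_map r True ((r - b) mod r) c) v" if v: "v \<in> PX_V r s" for v
    proof -
      have "?F v = ?R0 (?F' v)" using R0_inv[OF r3 s1 FV[OF v]] by simp
      also have "\<dots> = ?R0 (T r b c v)" using Fe v by simp
      also have "\<dots> = R r ((r - b) mod r) c v" using RT[OF r3 s1 v b] .
      also have "\<dots> = act_V r (H_map r True ((r - b) mod r) c) v" using actR[OF r3 s1 v] by simp
      finally show ?thesis .
    qed
    thus ?thesis using final_match[OF r3 s1 aut _ g] g by blast
  qed
qed

end


context
  fixes r s :: nat
  assumes r3: "3 \<le> r" and s1: "1 \<le> s" and sr: "s \<le> r - 1"
begin

lemmas inVc_k[simp] = inV[OF r3 s1]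
lemmas inVc_k' = inV'[OF r3 s1]
lemmas arcI_k = arc_iff[OF r3 s1]

lemma exists_c: "x < r \<Longrightarrow> length e = s \<Longrightarrow> length e' = s \<Longrightarrow> \<exists>c. xb r c x e = e'"
proof -
  assume x: "x < r" and e: "length e = s" and e': "length e' = s"
  define c where "c z = (let j = (z + r - x) mod r in if j < s then e ! j \<noteq> e' ! j else False)" for z
  have jj: "((x + j) mod r + r - x) mod r = j" if j: "j < s" for j
  proof -
    have jr: "j < r" using j sr r3 by simp
    have "(((x + j) mod r + r - x) mod r = j) \<longleftrightarrow> int r dvd ((int ((x + j) mod r) + int r - int x) - int j)"
      by (rule lev_eq_dvd[OF r3 s1 _ repId[OF r3 s1 jr]]) (use x in \<open>simp add: zmod_int of_nat_diff\<close>)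
    moreover have "int r dvd (int ((x + j) mod r) - (int x + int j))" by (rule rep_dvd) (simp add: zmod_int)
    moreover have "(int ((x + j) mod r) + int r - int x) - int j = (int ((x + j) mod r) - (int x + int j)) + int r"
      by simp
    ultimately show ?thesis by (metis dvd_add dvd_refl)
  qed
  have "xb r c x e = e'"
  proof (rule nth_equalityI)
    show "length (xb r c x e) = length e'" using e e' by simp
    fix j assume "j < length (xb r c x e)"
    hence j: "j < s" using e by simp
    show "xb r c x e ! j = e' ! j" using j e jj[OF j] by (simp add: c_def Let_def, cases "e ! j", auto)
  qed
  thus ?thesis by blast
qed

lemma conj3:
  assumes g: "g \<in> H_grp r" and g': "g' \<in> H_grp r"
    and eq: "\<forall>p\<in>sPX_V r s. act_sV r g p = act_sV r g' p"
  shows "g = g'"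
proof -
  obtain neg b c where b: "b < r" and ge: "g = H_map r neg b c" using g H_iff by blast
  obtain neg' b' c' where b': "b' < r" and ge': "g' = H_map r neg' b' c'" using g' H_iff by blast
  have EV: "act_V r g v = act_V r g' v" if v: "v \<in> PX_V r s" for v
  proof -
    have "(v, Cp r v) \<in> sPX_V r s" using SV_pair[OF r3 s1 v] by blast
    hence "act_sV r g (v, Cp r v) = act_sV r g' (v, Cp r v)" using eq by blast
    thus ?thesis by (simp add: act_sV_def)
  qed
  define zs where "zs = replicate s False"
  have zV: "(z, zs) \<in> PX_V r s" if "z < r" for z using that by (simp add: zs_def)
  have z0: "zs ! 0 = False" using s1 by (simp add: zs_def)
  have lz: "0 < length zs" using s1 by (simp add: zs_def)
  have main: "neg = neg' \<and> b = b' \<and> (\<forall>z<r. c z = c' z)"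
  proof (cases neg; cases neg')
    assume n: "\<not> neg" "\<not> neg'"
    have E: "T r b c v = T r b' c' v" if "v \<in> PX_V r s" for v
      using EV[OF that] actT[OF r3 s1 that] n ge ge' by simp
    have "b = b'" using E[OF zV[of 0]] b b' r3 by (simp add: T_def)
    moreover have "c z = c' z" if z: "z < r" for z
    proof -
      have "xb r c z zs ! 0 = xb r c' z zs ! 0" using E[OF zV[OF z]] by (simp add: T_def)
      thus ?thesis using lz z0 z by simp
    qed
    ultimately show ?thesis using n by simp
  next
    assume n: "neg" "neg'"
    have E: "R r b c v = R r b' c' v" if "v \<in> PX_V r s" for v
      using EV[OF that] actR[OF r3 s1 that] n ge ge' by simp
    have "(r - (0 + length zs - 1) mod r + b) mod r = (r - (0 + length zs - 1) mod r + b') mod r"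
      using E[OF zV[of 0]] r3 by (simp add: R_def)
    hence "int r dvd ((int b - int (0 + length zs - 1)) - (int b' - int (0 + length zs - 1)))"
      using lev_eq_dvd[OF r3 s1 repR[OF r3 s1] repR[OF r3 s1]] by blast
    hence "int r dvd (int b - int b')" by simp
    hence "b = b'" using lev_eq_dvd[OF r3 s1 repId[OF r3 s1 b] repId[OF r3 s1 b']] by blast
    moreover have "c z = c' z" if z: "z < r" for z
    proof -
      have "rev (xb r c z zs) = rev (xb r c' z zs)" using E[OF zV[OF z]] by (simp add: R_def)
      hence "xb r c z zs ! 0 = xb r c' z zs ! 0" by simp
      thus ?thesis using lz z0 z by simp
    qed
    ultimately show ?thesis using n by simp
  next
    assume n: "\<not> neg" "neg'"
    have E: "T r b c v = R r b' c' v" if "v \<in> PX_V r s" for v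
      using EV[OF that] actT[OF r3 s1 that] actR[OF r3 s1 that] n ge ge' by simp
    have l0: "(0 + b) mod r = (r - (0 + s - 1) mod r + b') mod r"
      using E[OF zV[of 0]] r3 by (simp add: T_def R_def zs_def)
    have l1: "(1 + b) mod r = (r - (1 + s - 1) mod r + b') mod r"
      using E[OF zV[of 1]] r3 by (simp add: T_def R_def zs_def)
    have d0: "int r dvd ((int 0 + int b) - (int b' - int (0 + s - 1)))"
      using lev_eq_dvd[OF r3 s1 int_T_lev repR[OF r3 s1]] l0 by blast
    have d1: "int r dvd ((int 1 + int b) - (int b' - int (1 + s - 1)))"
      using lev_eq_dvd[OF r3 s1 int_T_lev repR[OF r3 s1]] l1 by blast
    have "((int 1 + int b) - (int b' - int (1 + s - 1))) - ((int 0 + int b) - (int b' - int (0 + s - 1))) = 2"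
      using s1 by (simp add: of_nat_diff)
    hence "int r dvd 2" using dvd_diff[OF d1 d0] by simp
    thus ?thesis using dvd_small_False[OF r3] by blast
  next
    assume n: "neg" "\<not> neg'"
    have E: "T r b' c' v = R r b c v" if "v \<in> PX_V r s" for v
      using EV[OF that] actT[OF r3 s1 that] actR[OF r3 s1 that] n ge ge' by simp
    have l0: "(0 + b') mod r = (r - (0 + s - 1) mod r + b) mod r"
      using E[OF zV[of 0]] r3 by (simp add: T_def R_def zs_def)
    have l1: "(1 + b') mod r = (r - (1 + s - 1) mod r + b) mod r"
      using E[OF zV[of 1]] r3 by (simp add: T_def R_def zs_def)
    have d0: "int r dvd ((int 0 + int b') - (int b - int (0 + s - 1)))"
      using lev_eq_dvd[OF r3 s1 int_T_lev repR[OF r3 s1]] l0 by blast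
    have d1: "int r dvd ((int 1 + int b') - (int b - int (1 + s - 1)))"
      using lev_eq_dvd[OF r3 s1 int_T_lev repR[OF r3 s1]] l1 by blast
    have "((int 1 + int b') - (int b - int (1 + s - 1))) - ((int 0 + int b') - (int b - int (0 + s - 1))) = 2"
      using s1 by (simp add: of_nat_diff)
    hence "int r dvd 2" using dvd_diff[OF d1 d0] by simp
    thus ?thesis using dvd_small_False[OF r3] by blast
  qed
  show ?thesis
  proof (rule ext)
    fix p :: "nat \<times> bool"
    obtain x i where p: "p = (x, i)" by fastforce
    have "x mod r < r" using r3 by simp
    hence "c (x mod r) = c' (x mod r)" using main by blast
    thus "g p = g' p" using main ge ge' p by (simp add: H_map_def)
  qed
qed

lemma img_Cp:
  assumes b: "b < r" and v: "v \<in> PX_V r s"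
  shows "snd (act_sV r (H_map r neg b c) (v, Cp r v)) =
     (if neg then Cm r (act_V r (H_map r neg b c) v) else Cp r (act_V r (H_map r neg b c) v))"
proof -
  let ?g = "H_map r neg b c"
  let ?G = "act_V r ?g"
  let ?Ct = "(\<lambda>e. ?G ` e) ` Cp r v"
  have g: "?g \<in> H_grp r" using b H_iff by blast
  have CtS: "?Ct \<in> PX_S r s" using H_props[OF r3 s1 g] Cp_S[OF r3 s1 v] by blast
  have GvV: "?G v \<in> PX_V r s" using H_props[OF r3 s1 g] v by blast
  have "v \<in> \<Union>(Cp r v)" using in_Cp[OF r3 s1 v] .
  hence Gv: "?G v \<in> \<Union>?Ct" by blast
  have cases: "?Ct = Cp r (?G v) \<or> ?Ct = Cm r (?G v)" using cyc_cases[OF r3 s1 CtS GvV Gv] .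
  obtain x e where ve: "v = (x, e)" by fastforce
  have x: "x < r" and e: "length e = s" using v ve by auto
  define u where "u = ((x + 1) mod r, tl e @ [False])"
  have uV: "u \<in> PX_V r s" using r3 e s1 by (simp add: u_def)
  have vu: "PX_arc r s v u" unfolding arcI_k using v uV by (simp add: ve u_def)
  have "u \<in> \<Union>(Cp r v)" unfolding Cp_def cyc_verts by (simp add: ve u_def cb_def)
  hence Gu: "?G u \<in> \<Union>?Ct" by blast
  have GuV: "?G u \<in> PX_V r s" using H_props[OF r3 s1 g] uV by blast
  show ?thesis
  proof (cases neg)
    case False
    have "PX_arc r s (?G v) (?G u)"
      using T_arc[OF r3 s1 v uV, of b c] vu actT[OF r3 s1 v] actT[OF r3 s1 uV] False by simp
    moreover have "?Ct \<noteq> Cm r (?G v)"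
    proof
      assume "?Ct = Cm r (?G v)"
      hence Gu': "?G u \<in> \<Union>(Cm r (?G v))" using Gu by simp
      have "PX_adj r s (?G v) (?G u)" using calculation by (simp add: PX_adj_def)
      hence "PX_arc r s (?G u) (?G v)" using L2[OF r3 s1 GvV Gu'] by blast
      thus False using arc_not_back[OF r3 s1] calculation by blast
    qed
    ultimately show ?thesis using cases False by (simp add: act_sV_def)
  next
    case True
    have "PX_arc r s (?G u) (?G v)"
      using R_arc[OF r3 s1 v uV, of b c] vu actR[OF r3 s1 v] actR[OF r3 s1 uV] True by simp
    moreover have "?Ct \<noteq> Cp r (?G v)"
    proof
      assume "?Ct = Cp r (?G v)"
      hence Gu': "?G u \<in> \<Union>(Cp r (?G v))" using Gu by simp
      have "PX_adj r s (?G v) (?G u)" using calculation by (simp add: PX_adj_def)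
      hence "PX_arc r s (?G v) (?G u)" using L1[OF r3 s1 GvV Gu'] by blast
      thus False using arc_not_back[OF r3 s1] calculation by blast
    qed
    ultimately show ?thesis using cases True by (simp add: act_sV_def)
  qed
qed

lemma img_Cm:
  assumes b: "b < r" and v: "v \<in> PX_V r s"
  shows "snd (act_sV r (H_map r neg b c) (v, Cm r v)) =
     (if neg then Cp r (act_V r (H_map r neg b c) v) else Cm r (act_V r (H_map r neg b c) v))"
proof -
  let ?g = "H_map r neg b c"
  let ?G = "act_V r ?g"
  have g: "?g \<in> H_grp r" using b H_iff by blast
  have A: "is_aut (sPX_V r s) (sPX_adj r s) (act_sV r ?g)" using conj1[OF r3 s1 g] .
  have bij: "bij_betw (act_sV r ?g) (sPX_V r s) (sPX_V r s)" using A unfolding is_aut_def by (rule conjunct1)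
  have p1: "(v, Cp r v) \<in> sPX_V r s" and p2: "(v, Cm r v) \<in> sPX_V r s" using SV_pair[OF r3 s1 v] by blast+
  have GvV: "?G v \<in> PX_V r s" using H_props[OF r3 s1 g] v by blast
  have in2: "act_sV r ?g (v, Cm r v) \<in> sPX_V r s" using bij_betw_apply[OF bij p2] .
  have f2: "fst (act_sV r ?g (v, Cm r v)) = ?G v" by (simp add: act_sV_def)
  have c2: "snd (act_sV r ?g (v, Cm r v)) = Cp r (?G v) \<or> snd (act_sV r ?g (v, Cm r v)) = Cm r (?G v)"
    using in2 f2 SV_pair[OF r3 s1 GvV] by (metis prod.collapse)
  have "act_sV r ?g (v, Cp r v) \<noteq> act_sV r ?g (v, Cm r v)"
    using bij_betw_imp_inj_on[OF bij] p1 p2 Cp_ne_Cm[OF r3 s1 v] by (metis inj_onD prod.inject)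
  hence ne: "snd (act_sV r ?g (v, Cp r v)) \<noteq> snd (act_sV r ?g (v, Cm r v))"
    by (simp add: act_sV_def)
  have pm: "Cp r (?G v) \<noteq> Cm r (?G v)" using Cp_ne_Cm[OF r3 s1 GvV] .
  show ?thesis using img_Cp[OF b v, of neg c] c2 ne pm by (cases neg) auto
qed

lemma conj4:
  assumes p: "p \<in> sPX_V r s" and q: "q \<in> sPX_V r s"
  shows "\<exists>g\<in>H_grp r. act_sV r g p = q"
proof -
  obtain v C where pe: "p = (v, C)" by fastforce
  obtain w D where qe: "q = (w, D)" by fastforce
  have v: "v \<in> PX_V r s" using SV_v[OF r3 s1 p] pe by simp
  have w: "w \<in> PX_V r s" using SV_v[OF r3 s1 q] qe by simp
  obtain x e where ve: "v = (x, e)" by fastforce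
  obtain y e' where we: "w = (y, e')" by fastforce
  have x: "x < r" and e: "length e = s" and y: "y < r" and e': "length e' = s" using v w ve we by auto
  have C: "C = Cp r v \<or> C = Cm r v" using SV_pair[OF r3 s1 v] p pe by blast
  have D: "D = Cp r w \<or> D = Cm r w" using SV_pair[OF r3 s1 w] q qe by blast
  define b0 where "b0 = (y + r - x) mod r"
  obtain c0 where c0: "xb r c0 x e = e'" using exists_c[OF x e e'] by blast
  have b0: "b0 < r" using r3 by (simp add: b0_def)
  have G0: "act_V r (H_map r False b0 c0) v = w"
  proof -
    have "(x + b0) mod r = (x + (y + r - x)) mod r" by (simp add: b0_def mod_simps)
    also have "x + (y + r - x) = y + r" using x by simp
    finally have "(x + b0) mod r = y" using y by simp
    thus ?thesis using actT[OF r3 s1 v] c0 by (simp add: T_def ve we)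
  qed
  define b1 where "b1 = (y + (x + s - 1)) mod r"
  obtain c1 where c1: "xb r c1 x e = rev e'" using exists_c[OF x e] e' by (metis length_rev)
  have b1: "b1 < r" using r3 by (simp add: b1_def)
  have G1: "act_V r (H_map r True b1 c1) v = w"
  proof -
    have "((r - (x + s - 1) mod r + b1) mod r = y) \<longleftrightarrow> int r dvd ((int b1 - int (x + s - 1)) - int y)"
      by (rule lev_eq_dvd[OF r3 s1 repR[OF r3 s1] repId[OF r3 s1 y]])
    moreover have "int r dvd (int b1 - (int y + int (x + s - 1)))"
      by (rule rep_dvd) (simp add: b1_def zmod_int)
    ultimately have "(r - (x + s - 1) mod r + b1) mod r = y" by (simp add: algebra_simps)
    thus ?thesis using actR[OF r3 s1 v] c1 e by (simp add: R_def ve we)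
  qed
  have g0: "H_map r False b0 c0 \<in> H_grp r" using b0 H_iff by blast
  have g1: "H_map r True b1 c1 \<in> H_grp r" using b1 H_iff by blast
  have fst0: "fst (act_sV r g p) = act_V r g v" for g using pe by (simp add: act_sV_def)
  show ?thesis
  proof (cases "C = Cp r v")
    case Cp: True
    show ?thesis
    proof (cases "D = Cp r w")
      case True
      have "act_sV r (H_map r False b0 c0) p = q"
        using img_Cp[OF b0 v, of False c0] G0 Cp True pe qe by (simp add: act_sV_def)
      thus ?thesis using g0 by blast
    next
      case False
      hence Dm: "D = Cm r w" using D by blast
      have "act_sV r (H_map r True b1 c1) p = q"
        using img_Cp[OF b1 v, of True c1] G1 Cp Dm pe qe by (simp add: act_sV_def)
      thus ?thesis using g1 by blast
    qed
  next
    case False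
    hence Cm: "C = Cm r v" using C by blast
    show ?thesis
    proof (cases "D = Cp r w")
      case True
      have "act_sV r (H_map r True b1 c1) p = q"
        using img_Cm[OF b1 v, of True c1] G1 Cm True pe qe by (simp add: act_sV_def)
      thus ?thesis using g1 by blast
    next
      case False
      hence Dm: "D = Cm r w" using D by blast
      have "act_sV r (H_map r False b0 c0) p = q"
        using img_Cm[OF b0 v, of False c0] G0 Cm Dm pe qe by (simp add: act_sV_def)
      thus ?thesis using g0 by blast
    qed
  qed
qed

end

theorem lemma2p12:
  fixes r s :: nat
  assumes "r \<ge> 3" and "1 \<le> s" and "s \<le> r - 1"
  shows "(\<forall>g\<in>H_grp r. is_aut (sPX_V r s) (sPX_adj r s) (act_sV r g))
    \<and> (\<forall>f. is_aut (sPX_V r s) (sPX_adj r s) f \<longrightarrow>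
           (\<exists>g\<in>H_grp r. \<forall>p\<in>sPX_V r s. f p = act_sV r g p))
    \<and> (\<forall>g\<in>H_grp r. \<forall>g'\<in>H_grp r.
           (\<forall>p\<in>sPX_V r s. act_sV r g p = act_sV r g' p) \<longrightarrow> g = g')
    \<and> (\<forall>p\<in>sPX_V r s. \<forall>q\<in>sPX_V r s. \<exists>g\<in>H_grp r. act_sV r g p = q)"
proof (intro conjI ballI allI impI)
  have r3: "3 \<le> r" and s1: "1 \<le> s" and sr: "s \<le> r - 1" using assms by auto
  show "is_aut (sPX_V r s) (sPX_adj r s) (act_sV r g)" if "g \<in> H_grp r" for g
    using conj1[OF r3 s1 that] .
  show "\<exists>g\<in>H_grp r. \<forall>p\<in>sPX_V r s. f p = act_sV r g p" if "is_aut (sPX_V r s) (sPX_adj r s) f" for f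
    using conj2[OF r3 s1 sr that] .
  show "g = g'" if "g \<in> H_grp r" "g' \<in> H_grp r" "\<forall>p\<in>sPX_V r s. act_sV r g p = act_sV r g' p" for g g'
    using conj3[OF r3 s1 sr that] .
  show "\<exists>g\<in>H_grp r. act_sV r g p = q" if "p \<in> sPX_V r s" "q \<in> sPX_V r s" for p q
    using conj4[OF r3 s1 sr that] .
qed

end
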